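(* Consider the threshold delay system (the "TDE model") described in the context, with the quantities $N_{T1}$, $P_2^*$, $N_{T2}$, $N_1^*$, $P_1^*$ defined there. If $N_{T1}<N_T<N_{T2}$, then the equilibrium $E_1=(N_1^*,P_1^*,0)^T$ is asymptotically stable, in the following sense: for every $\varepsilon>0$ there is a neighbourhood $\mathcal{N}_\varepsilon$ of $E_1$ such that whenever $(\phi_1,\phi_2,\phi_3)\in D_{N_T}\cap\mathcal{N}_\varepsilon$, the solution $(N,P,Z)^T$ of the corresponding initial value problem satisfies $\|(N(t),P(t),Z(t))^T-E_1\|<\varepsilon$ for all $t\ge t_0$ and $\lim_{t\to\infty}(N(t),P(t),Z(t))^T=E_1$.
   Context: Standing assumptions: constants $\mu>\lambda>0$, $g>0$, $\gamma\in(0,1]$, $\delta>0$ with $\gamma g>\delta$, $\delta_0\ge 0$, $m>0$, $N_T>0$. The functions $f,h:[0,\infty)\to[0,\infty)$ are $C^1$ with $f(0)=0$, $f'>0$, $\lim_{N\to\infty}f(N)=1$ and $h(0)=0$, $h'>0$, $\lim_{P\to\infty}h(P)=1$. The function $R:[0,\infty)\to[0,\infty)$ is $C^1$ with $R\ge0$, $R'\ge0$, $R'(0)>0$ if $R(0)=0$, $\lim_{P\to\infty}R(P)=R_\infty<\infty$. For a function $P$ and $s\in[0,m]$, the delay $\tau(s,P_t)\ge0$ is defined implicitly by $\int_{-\tau(s,P_t)}^0 R(P(t+u))\,du=s$. TDE model, for $t\ge t_0$: $$N'(t)=-\mu P f(N)+\lambda P+\delta Z+(1-\gamma)gZh(P)+\delta_0(N_T-N-P-Z),$$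 $$P'(t)=\mu P f(N)-\lambda P-gZh(P),$$ $$Z'(t)=R(P(t))e^{-\delta_0\tau(m,P_t)}\frac{\gamma g Z(t-\tau(m,P_t))h(P(t-\tau(m,P_t)))}{R(P(t-\tau(m,P_t)))}-\delta Z(t),$$ with initial conditions $N(t_0+t)=\phi_1(t)$, $P(t_0+t)=\phi_2(t)$, $Z(t_0+t)=\phi_3(t)$ for $t\in[-t_0,0]$. $D_{N_T}$ is the set of triples $(\phi_1,\phi_2,\phi_3)$ of continuous functions on $[-t_0,0]$ (some $t_0>0$) with $\phi_i>0$, $\int_{-t_0}^0R(\phi_2(u))\,du=m$, and $$N_T=\phi_1(0)+\phi_2(0)+\phi_3(0)+\int_0^m e^{-\delta_0\tau(s,\phi_2)}\frac{\gamma g\,\phi_3(-\tau(s,\phi_2))h(\phi_2(-\tau(s,\phi_2)))}{R(\phi_2(-\tau(s,\phi_2)))}\,ds,$$ where $\tau(s,\phi_2)\in[0,t_0]$ solves $\int_{-\tau(s,\phi_2)}^0R(\phi_2(u))\,du=s$. Neighbourhoods of the constant triple $E_1$ are taken with respect to the sup norm of the initial functions. Define $N_{T1}=f^{-1}(\lambda/\mu)$, $N_1^*=N_{T1}$, $P_1^*=N_T-N_{T1}$. Let $P_2^*>0$ be the unique positive solution of $\gamma g\,e^{-\delta_0 m/R(P)}h(P)=\delta$ (it exists if $\delta_0=0$, or if $\delta_0>0$ and $m<R_\infty\ln(\gamma g/\delta)/\delta_0$; this is assumed), and $N_{T2}=N_{T1}+P_2^*$. *)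

theory Defs
  imports "HOL-Analysis.Analysis"
begin

definition tdelay :: "(real \<Rightarrow> real) \<Rightarrow> (real \<Rightarrow> real) \<Rightarrow> real \<Rightarrow> real \<Rightarrow> real \<Rightarrow> real" where
  "tdelay R p a t s = (THE T. T \<in> {0..t - a} \<and> integral {t - T..t} (\<lambda>u. R (p u)) = s)"

definition in_D :: "real \<Rightarrow> real \<Rightarrow> real \<Rightarrow> real \<Rightarrow> real \<Rightarrow> real \<Rightarrow>
    (real \<Rightarrow> real) \<Rightarrow> (real \<Rightarrow> real) \<Rightarrow>
    (real \<Rightarrow> real) \<Rightarrow> (real \<Rightarrow> real) \<Rightarrow> (real \<Rightarrow> real) \<Rightarrow> bool" where
  "in_D g gam del0 m NT t0 h R \<phi>1 \<phi>2 \<phi>3 \<longleftrightarrow>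
     t0 > 0 \<and>
     continuous_on {-t0..0} \<phi>1 \<and> continuous_on {-t0..0} \<phi>2 \<and> continuous_on {-t0..0} \<phi>3 \<and>
     (\<forall>t\<in>{-t0..0}. \<phi>1 t > 0 \<and> \<phi>2 t > 0 \<and> \<phi>3 t > 0) \<and>
     integral {-t0..0} (\<lambda>u. R (\<phi>2 u)) = m \<and>
     NT = \<phi>1 0 + \<phi>2 0 + \<phi>3 0 +
       integral {0..m} (\<lambda>s. let T = tdelay R \<phi>2 (-t0) 0 s in
          exp (- del0 * T) * gam * g * \<phi>3 (-T) * h (\<phi>2 (-T)) / R (\<phi>2 (-T)))"

definition tde_solution :: "real \<Rightarrow> real \<Rightarrow> real \<Rightarrow> real \<Rightarrow> real \<Rightarrow> real \<Rightarrow> real \<Rightarrow> real \<Rightarrow>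
    (real \<Rightarrow> real) \<Rightarrow> (real \<Rightarrow> real) \<Rightarrow> (real \<Rightarrow> real) \<Rightarrow> real \<Rightarrow>
    (real \<Rightarrow> real) \<Rightarrow> (real \<Rightarrow> real) \<Rightarrow> (real \<Rightarrow> real) \<Rightarrow>
    (real \<Rightarrow> real) \<Rightarrow> (real \<Rightarrow> real) \<Rightarrow> (real \<Rightarrow> real) \<Rightarrow> bool" where
  "tde_solution mu lam g gam del del0 m NT f h R t0 \<phi>1 \<phi>2 \<phi>3 N P Z \<longleftrightarrow>
     (\<forall>t\<in>{-t0..0}. N (t0 + t) = \<phi>1 t \<and> P (t0 + t) = \<phi>2 t \<and> Z (t0 + t) = \<phi>3 t) \<and>
     (\<forall>t\<ge>t0.
        (N has_real_derivative
           (- mu * P t * f (N t) + lam * P t + del * Z t + (1 - gam) * g * Z t * h (P t)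
            + del0 * (NT - N t - P t - Z t))) (at t within {t0..}) \<and>
        (P has_real_derivative
           (mu * P t * f (N t) - lam * P t - g * Z t * h (P t))) (at t within {t0..}) \<and>
        (Z has_real_derivative
           (let T = tdelay R P 0 t m in
              R (P t) * exp (- del0 * T) * (gam * g * Z (t - T) * h (P (t - T)) / R (P (t - T)))
              - del * Z t)) (at t within {t0..}))"

end

theory Submission
  imports Defs
begin

lemma deriv_at_of_within0:
  fixes F :: "real \<Rightarrow> real"
  assumes "(F has_real_derivative D) (at x within {0..})" "x > 0"
  shows "(F has_real_derivative D) (at x)"
proof -
  have "x \<in> interior {0..}" using assms(2) by simp
  then have "at x within {0..} = at x" by (rule at_within_interior)
  then show ?thesis using assms(1) by simp
qed

lemma cont_of_deriv0:
  fixes F F' :: "real \<Rightarrow> real"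
  assumes "\<forall>x\<ge>0. (F has_real_derivative F' x) (at x within {0..})"
  shows "continuous_on {0..} F"
  unfolding continuous_on_eq_continuous_within
proof
  fix x :: real assume "x \<in> {0..}"
  then show "continuous (at x within {0..}) F" using assms DERIV_continuous by (meson atLeast_iff)
qed

lemma slope_lemma:
  fixes F F' :: "real \<Rightarrow> real"
  assumes der: "\<forall>x\<ge>0. (F has_real_derivative F' x) (at x within {0..})"
    and cont': "continuous_on {0..} F'" and pos: "\<forall>x\<ge>0. F' x > 0"
    and ab: "0 < a" "a \<le> b"
  shows "\<exists>c>0. \<forall>y z. a \<le> y \<longrightarrow> y \<le> z \<longrightarrow> z \<le> b \<longrightarrow> F z - F y \<ge> c * (z - y)"
proof -
  have "continuous_on {a..b} F'" by (rule continuous_on_subset[OF cont']) (use ab in auto)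
  then obtain x0 where x0: "x0 \<in> {a..b}" "\<forall>y\<in>{a..b}. F' x0 \<le> F' y"
    using continuous_attains_inf[of "{a..b}" F'] ab by auto
  define c where "c = F' x0"
  have cpos: "c > 0" using pos x0 ab unfolding c_def by auto
  have contF: "continuous_on {0..} F" by (rule cont_of_deriv0[OF der])
  have "F z - F y \<ge> c * (z - y)" if "a \<le> y" "y \<le> z" "z \<le> b" for y z
  proof -
    have "(\<lambda>x. F x - c * x) y \<le> (\<lambda>x. F x - c * x) z"
    proof (rule DERIV_nonneg_imp_increasing_open[OF \<open>y \<le> z\<close>])
      fix x assume x: "y < x" "x < z"
      have "(F has_real_derivative F' x) (at x)"
        using der x that ab by (intro deriv_at_of_within0) auto
      then have "((\<lambda>x. F x - c * x) has_real_derivative F' x - c) (at x)"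
        by (auto intro!: derivative_eq_intros)
      moreover have "F' x - c \<ge> 0" using x0 x that unfolding c_def by auto
      ultimately show "\<exists>y. ((\<lambda>x. F x - c * x) has_real_derivative y) (at x) \<and> 0 \<le> y" by blast
    next
      have "continuous_on {y..z} F" by (rule continuous_on_subset[OF contF]) (use that ab in auto)
      then show "continuous_on {y..z} (\<lambda>x. F x - c * x)" by (auto intro!: continuous_intros)
    qed
    then show ?thesis by (simp add: algebra_simps)
  qed
  then show ?thesis using cpos by blast
qed

lemma integral_lower:
  fixes F :: "real \<Rightarrow> real"
  assumes "continuous_on {x..y} F" "x \<le> y" "\<forall>u\<in>{x..y}. F u \<ge> c"
  shows "integral {x..y} F \<ge> c * (y - x)"
proof -
  have "integral {x..y} (\<lambda>u. c) \<le> integral {x..y} F"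
    by (rule integral_le) (use assms in \<open>auto intro: integrable_continuous_real\<close>)
  then show ?thesis using assms(2) by (simp add: mult.commute)
qed

lemma integral_upper:
  fixes F :: "real \<Rightarrow> real"
  assumes "continuous_on {x..y} F" "x \<le> y" "\<forall>u\<in>{x..y}. F u \<le> c"
  shows "integral {x..y} F \<le> c * (y - x)"
proof -
  have "integral {x..y} F \<le> integral {x..y} (\<lambda>u. c)"
    by (rule integral_le) (use assms in \<open>auto intro: integrable_continuous_real\<close>)
  then show ?thesis using assms(2) by (simp add: mult.commute)
qed

lemma integral_abs_bound:
  fixes F :: "real \<Rightarrow> real"
  assumes "continuous_on {x..y} F" "x \<le> y" "\<forall>u\<in>{x..y}. \<bar>F u\<bar> \<le> M"
  shows "\<bar>integral {x..y} F\<bar> \<le> M * (y - x)"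
proof -
  have "integral {x..y} F \<le> M * (y - x)" using assms by (intro integral_upper) auto
  moreover have "integral {x..y} F \<ge> (-M) * (y - x)" using assms by (intro integral_lower) auto
  ultimately show ?thesis by auto
qed

locale tde =
  fixes mu lam g gam del del0 m NT :: real
    and f h R f' :: "real \<Rightarrow> real" and N1 P1 :: real
  assumes mu_gt: "mu > lam" and lam_pos: "lam > 0" and g_pos: "g > 0" and gam_pos: "gam > 0"
    and gam_le: "gam \<le> 1" and del_pos: "del > 0" and del0_nn: "del0 \<ge> 0" and m_pos: "m > 0"
    and f_der: "\<forall>x\<ge>0. (f has_real_derivative f' x) (at x within {0..})"
    and f'_cont: "continuous_on {0..} f'" and f'_pos: "\<forall>x\<ge>0. f' x > 0"
    and h_cont: "continuous_on {0..} h" and h_mono: "\<And>x y. 0 \<le> x \<Longrightarrow> x < y \<Longrightarrow> h x < h y"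
    and h0: "h 0 = 0"
    and R_cont: "continuous_on {0..} R" and R_mono: "\<And>x y. 0 \<le> x \<Longrightarrow> x \<le> y \<Longrightarrow> R x \<le> R y"
    and R_pos: "\<And>x. x > 0 \<Longrightarrow> R x > 0"
    and N1_pos: "N1 > 0" and fN1: "f N1 = lam / mu" and P1_pos: "P1 > 0" and NT_eq: "NT = N1 + P1"
    and qP1: "gam * g * exp (- del0 * m / R P1) * h P1 < del"
begin

lemma h_nonneg: "x \<ge> 0 \<Longrightarrow> h x \<ge> 0"
  using h_mono[of 0 x] h0 by (cases "x = 0") auto

lemma h_mono': "0 \<le> x \<Longrightarrow> x \<le> y \<Longrightarrow> h x \<le> h y"
  using h_mono[of x y] by (cases "x = y") auto

lemma mu_pos: "mu > 0" using mu_gt lam_pos by simp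

end

locale tde_eta = tde +
  fixes \<eta> \<alpha> c :: real
  assumes eta_pos: "\<eta> > 0" and eta_P1: "\<eta> < P1 / 2" and eta_N1: "\<eta> < N1 / 2"
    and alpha_pos: "\<alpha> > 0"
    and alpha_cond: "\<alpha> + (R (P1 + \<eta>) / R (P1 - \<eta>) * exp (- del0 * m / R (P1 + \<eta>)) * (gam * g) * h (P1 + \<eta>))
                      * exp (\<alpha> * (m / R (P1 - \<eta>))) < del"
    and c_pos: "c > 0"
    and slope: "\<forall>y z. N1 - \<eta> \<le> y \<longrightarrow> y \<le> z \<longrightarrow> z \<le> N1 + \<eta> \<longrightarrow> f z - f y \<ge> c * (z - y)"
begin

definition "Rlo = R (P1 - \<eta>)"
definition "Rhi = R (P1 + \<eta>)"
definition "hmax = h (P1 + \<eta>)"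
definition "kk = Rhi / Rlo * exp (- del0 * m / Rhi) * (gam * g) * hmax"
definition "tmax = m / Rlo"
definition "C1 = tmax * gam * g * hmax * exp (\<alpha> * tmax)"
definition "beta = (P1 - \<eta>) * mu * c / 2"
definition "alpha' = min \<alpha> (beta / 4)"
definition "C2 = 1 + 2 * (1 + C1) + 2 * g * hmax / beta"
definition "C3 = C2 + 1 + C1 + 1"

lemma Rlo_pos: "Rlo > 0" unfolding Rlo_def using eta_P1 eta_pos by (intro R_pos) auto
lemma Rhi_pos: "Rhi > 0" unfolding Rhi_def using eta_P1 eta_pos P1_pos by (intro R_pos) auto
lemma hmax_pos: "hmax > 0" unfolding hmax_def using h_mono[of 0 "P1 + \<eta>"] h0 eta_pos P1_pos by auto
lemma kk_nn: "kk \<ge> 0" unfolding kk_def using Rlo_pos Rhi_pos hmax_pos gam_pos g_pos by auto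
lemma alpha_cond': "\<alpha> + kk * exp (\<alpha> * tmax) < del"
  using alpha_cond unfolding kk_def tmax_def Rlo_def Rhi_def hmax_def by simp
lemma tmax_pos: "tmax > 0" unfolding tmax_def using m_pos Rlo_pos by simp
lemma C1_nn: "C1 \<ge> 0" unfolding C1_def using tmax_pos gam_pos g_pos hmax_pos by auto
lemma beta_pos: "beta > 0" unfolding beta_def using eta_P1 mu_pos c_pos P1_pos by auto
lemma alpha'_pos: "alpha' > 0" unfolding alpha'_def using beta_pos alpha_pos by auto
lemma alpha'_le: "alpha' \<le> \<alpha>" "alpha' \<le> beta / 4" unfolding alpha'_def by auto
lemma C2_ge: "C2 \<ge> 1 + 2 * (1 + C1)" "C2 \<ge> 2 * g * hmax / beta" 
  unfolding C2_def using C1_nn beta_pos g_pos hmax_pos by auto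
lemma C3_pos: "C3 > 0" unfolding C3_def using C2_ge C1_nn by auto

end


locale tde_sol = tde_eta +
  fixes t0 r b :: real and \<phi>1 \<phi>2 \<phi>3 N P Z :: "real \<Rightarrow> real"
  assumes inD: "in_D g gam del0 m NT t0 h R \<phi>1 \<phi>2 \<phi>3"
    and sol: "tde_solution mu lam g gam del del0 m NT f h R t0 \<phi>1 \<phi>2 \<phi>3 N P Z"
    and init: "\<forall>t\<in>{-t0..0}. \<bar>\<phi>1 t - N1\<bar> < r \<and> \<bar>\<phi>2 t - P1\<bar> < r \<and> \<bar>\<phi>3 t\<bar> < r"
    and r_pos: "0 < r" and r_le: "r \<le> \<eta>"
    and b_ge: "t0 \<le> b"
    and ball: "\<forall>t\<in>{t0..b}. \<bar>N t - N1\<bar> \<le> \<eta> \<and> \<bar>P t - P1\<bar> \<le> \<eta> \<and> \<bar>Z t\<bar> \<le> \<eta>"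
begin

lemma t0_pos: "t0 > 0" using inD unfolding in_D_def by auto
lemma b_pos: "b > 0" using t0_pos b_ge by simp
lemma phi_cont: "continuous_on {-t0..0} \<phi>1" "continuous_on {-t0..0} \<phi>2" "continuous_on {-t0..0} \<phi>3"
  using inD unfolding in_D_def by auto
lemma int_m: "integral {-t0..0} (\<lambda>u. R (\<phi>2 u)) = m" using inD unfolding in_D_def by auto
lemma NT_in: "NT = \<phi>1 0 + \<phi>2 0 + \<phi>3 0 +
       integral {0..m} (\<lambda>s. let T = tdelay R \<phi>2 (-t0) 0 s in
          exp (- del0 * T) * gam * g * \<phi>3 (-T) * h (\<phi>2 (-T)) / R (\<phi>2 (-T)))"
  using inD unfolding in_D_def by auto

lemma init_eq: "u \<in> {0..t0} \<Longrightarrow> N u = \<phi>1 (u - t0) \<and> P u = \<phi>2 (u - t0) \<and> Z u = \<phi>3 (u - t0)"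
proof -
  assume u: "u \<in> {0..t0}"
  have "\<forall>t\<in>{-t0..0}. N (t0 + t) = \<phi>1 t \<and> P (t0 + t) = \<phi>2 t \<and> Z (t0 + t) = \<phi>3 t"
    using sol unfolding tde_solution_def by blast
  from bspec[OF this, of "u - t0"] u show ?thesis by auto
qed

lemma dN: "t \<ge> t0 \<Longrightarrow> (N has_real_derivative
           (- mu * P t * f (N t) + lam * P t + del * Z t + (1 - gam) * g * Z t * h (P t)
            + del0 * (NT - N t - P t - Z t))) (at t within {t0..})"
  using sol unfolding tde_solution_def by blast
lemma dP: "t \<ge> t0 \<Longrightarrow> (P has_real_derivative
           (mu * P t * f (N t) - lam * P t - g * Z t * h (P t))) (at t within {t0..})"
  using sol unfolding tde_solution_def by blast
lemma dZ: "t \<ge> t0 \<Longrightarrow> (Z has_real_derivative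
           (let T = tdelay R P 0 t m in
              R (P t) * exp (- del0 * T) * (gam * g * Z (t - T) * h (P (t - T)) / R (P (t - T)))
              - del * Z t)) (at t within {t0..})"
  using sol unfolding tde_solution_def by blast

lemma glue:
  assumes eq: "\<forall>u\<in>{0..t0}. X u = \<psi> (u - t0)" and c: "continuous_on {-t0..0} \<psi>"
    and d: "\<forall>t\<ge>t0. \<exists>D. (X has_real_derivative D) (at t within {t0..})"
  shows "continuous_on {0..b} X"
proof -
  have c1: "continuous_on {0..t0} (\<lambda>u. \<psi> (u - t0))"
    by (rule continuous_on_compose2[OF c]) (auto intro!: continuous_intros)
  have c1': "continuous_on {0..t0} X" using continuous_on_cong[of "{0..t0}" "{0..t0}" X "\<lambda>u. \<psi> (u - t0)"] eq c1 by auto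
  have c2: "continuous_on {t0..b} X"
    unfolding continuous_on_eq_continuous_within
  proof
    fix t assume t: "t \<in> {t0..b}"
    then obtain D where "(X has_real_derivative D) (at t within {t0..})" using d by auto
    then have "continuous (at t within {t0..}) X" by (rule DERIV_continuous)
    then show "continuous (at t within {t0..b}) X" by (rule continuous_within_subset) auto
  qed
  have "{0..b} = {0..t0} \<union> {t0..b}" using t0_pos b_ge by auto
  then show ?thesis using continuous_on_closed_Un[OF _ _ c1' c2] by simp
qed

lemma N_cont: "continuous_on {0..b} N"
  using init_eq phi_cont dN by (intro glue[of N \<phi>1]) auto
lemma P_cont: "continuous_on {0..b} P"
  using init_eq phi_cont dP by (intro glue[of P \<phi>2]) auto
lemma Z_cont: "continuous_on {0..b} Z"
  using init_eq phi_cont dZ by (intro glue[of Z \<phi>3]) blast+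

lemma P_ball: "u \<in> {0..b} \<Longrightarrow> \<bar>P u - P1\<bar> \<le> \<eta>"
proof (cases "u \<le> t0")
  case True
  assume u: "u \<in> {0..b}"
  then have "P u = \<phi>2 (u - t0)" using init_eq True by auto
  moreover have "\<bar>\<phi>2 (u - t0) - P1\<bar> < r" using init u True by auto
  ultimately show ?thesis using r_le by simp
next
  case False
  assume u: "u \<in> {0..b}"
  then show ?thesis using ball False by auto
qed

lemma P_lo: "u \<in> {0..b} \<Longrightarrow> P u \<ge> P1 - \<eta>" using P_ball[of u] by auto
lemma P_hi: "u \<in> {0..b} \<Longrightarrow> P u \<le> P1 + \<eta>" using P_ball[of u] by auto
lemma P_pos: "u \<in> {0..b} \<Longrightarrow> P u > 0" using P_lo[of u] eta_P1 eta_pos P1_pos by auto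
lemma RP_lo: "u \<in> {0..b} \<Longrightarrow> R (P u) \<ge> Rlo"
  unfolding Rlo_def using P_lo[of u] eta_P1 eta_pos P1_pos by (intro R_mono) auto
lemma RP_hi: "u \<in> {0..b} \<Longrightarrow> R (P u) \<le> Rhi"
  unfolding Rhi_def using P_hi[of u] P_pos[of u] by (intro R_mono) auto
lemma RP_pos: "u \<in> {0..b} \<Longrightarrow> R (P u) > 0" using RP_lo[of u] Rlo_pos by simp
lemma hP_nn: "u \<in> {0..b} \<Longrightarrow> h (P u) \<ge> 0" using P_pos[of u] by (intro h_nonneg) simp
lemma hP_hi: "u \<in> {0..b} \<Longrightarrow> h (P u) \<le> hmax"
  unfolding hmax_def using P_hi[of u] P_pos[of u] by (intro h_mono') auto

lemma P_img: "P ` {0..b} \<subseteq> {0..}" using P_pos by force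

lemma RP_cont: "continuous_on {0..b} (\<lambda>u. R (P u))"
  by (rule continuous_on_compose2[OF R_cont P_cont P_img])
lemma hP_cont: "continuous_on {0..b} (\<lambda>u. h (P u))"
  by (rule continuous_on_compose2[OF h_cont P_cont P_img])

definition "a t = integral {0..t} (\<lambda>u. R (P u))"

lemma a_der: "t \<in> {0..b} \<Longrightarrow> (a has_real_derivative R (P t)) (at t within {0..b})"
  unfolding a_def[abs_def] by (rule integral_has_real_derivative[OF RP_cont])

lemma a_cont: "continuous_on {0..b} a"
  unfolding continuous_on_eq_continuous_within using a_der DERIV_continuous by blast

lemma a_diff: "0 \<le> x \<Longrightarrow> x \<le> y \<Longrightarrow> y \<le> b \<Longrightarrow> a y - a x = integral {x..y} (\<lambda>u. R (P u))"
proof -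
  assume xy: "0 \<le> x" "x \<le> y" "y \<le> b"
  have "continuous_on {0..y} (\<lambda>u. R (P u))" by (rule continuous_on_subset[OF RP_cont]) (use xy in auto)
  then have "(\<lambda>u. R (P u)) integrable_on {0..y}" by (rule integrable_continuous_real)
  from Henstock_Kurzweil_Integration.integral_combine[OF xy(1,2) this] show ?thesis unfolding a_def by simp
qed

lemma a_bounds: "0 \<le> x \<Longrightarrow> x \<le> y \<Longrightarrow> y \<le> b \<Longrightarrow> a y - a x \<ge> Rlo * (y - x) \<and> a y - a x \<le> Rhi * (y - x)"
proof -
  assume xy: "0 \<le> x" "x \<le> y" "y \<le> b"
  have c: "continuous_on {x..y} (\<lambda>u. R (P u))" by (rule continuous_on_subset[OF RP_cont]) (use xy in auto)
  show ?thesis unfolding a_diff[OF xy]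
    using integral_lower[OF c xy(2), of Rlo] integral_upper[OF c xy(2), of Rhi] RP_lo RP_hi xy by auto
qed

lemma a_strict: "0 \<le> x \<Longrightarrow> x < y \<Longrightarrow> y \<le> b \<Longrightarrow> a x < a y"
  using a_bounds[of x y] Rlo_pos by (smt (verit) mult_pos_pos)

lemma a_mono: "0 \<le> x \<Longrightarrow> x \<le> y \<Longrightarrow> y \<le> b \<Longrightarrow> a x \<le> a y"
  using a_strict[of x y] by (cases "x = y") auto

lemma a_inj: "inj_on a {0..b}"
proof (rule inj_onI)
  fix x y assume xy: "x \<in> {0..b}" "y \<in> {0..b}" "a x = a y"
  show "x = y"
  proof (rule ccontr)
    assume "x \<noteq> y"
    then have "x < y \<or> y < x" by auto
    then show False using a_strict[of x y] a_strict[of y x] xy by auto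
  qed
qed

lemma a0: "a 0 = 0" unfolding a_def by simp

lemma shift_int:
  assumes "0 \<le> x" "x \<le> y" "y \<le> t0"
  shows "integral {x..y} (\<lambda>u. R (P u)) = integral {x - t0..y - t0} (\<lambda>u. R (\<phi>2 u))"
proof -
  have "integral {x..y} (\<lambda>u. R (P u)) = integral {x..y} (\<lambda>u. R (\<phi>2 (u + - t0)))"
    by (rule integral_cong) (use init_eq assms in auto)
  also have "\<dots> = integral {x - t0..y - t0} (\<lambda>u. R (\<phi>2 u))"
    using integral_shift_real_ivl[where f="\<lambda>u. R (\<phi>2 u)" and a="x - t0" and c="-t0" and b="y - t0"] by simp
  finally show ?thesis .
qed

lemma at0: "a t0 = m"
  using shift_int[of 0 t0] t0_pos int_m unfolding a_def by simp

lemma a_image: "a ` {0..b} = {0..a b}"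
proof
  show "a ` {0..b} \<subseteq> {0..a b}" using a_mono a0 by (force intro: a_mono)
next
  show "{0..a b} \<subseteq> a ` {0..b}"
  proof
    fix y assume y: "y \<in> {0..a b}"
    then obtain x where "0 \<le> x" "x \<le> b" "a x = y"
      using IVT'[of a 0 y b] a0 a_cont b_pos by auto
    then show "y \<in> a ` {0..b}" by auto
  qed
qed

definition "ainv = the_inv_into {0..b} a"

lemma ainv: "y \<in> {0..a b} \<Longrightarrow> ainv y \<in> {0..b} \<and> a (ainv y) = y"
  unfolding ainv_def using a_inj a_image
  by (metis f_the_inv_into_f the_inv_into_into order_refl)

lemma ainv_a: "x \<in> {0..b} \<Longrightarrow> ainv (a x) = x"
  unfolding ainv_def using a_inj by (rule the_inv_into_f_f)

lemma ainv_cont: "continuous_on {0..a b} ainv"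
proof -
  have "continuous_on (a ` {0..b}) ainv"
    by (rule continuous_on_inv[OF a_cont compact_Icc]) (auto simp: ainv_a)
  then show ?thesis using a_image by simp
qed

definition "sig t = ainv (a t - m)"

lemma am_range: "t \<in> {t0..b} \<Longrightarrow> a t - m \<in> {0..a b}"
  using a_mono[of t0 t] a_mono[of t b] at0 t0_pos m_pos by auto

lemma sig_props: "t \<in> {t0..b} \<Longrightarrow> sig t \<in> {0..b} \<and> a (sig t) = a t - m"
  unfolding sig_def using ainv am_range by blast

lemma sig_lt: "t \<in> {t0..b} \<Longrightarrow> sig t < t"
proof (rule ccontr)
  assume t: "t \<in> {t0..b}" and "\<not> sig t < t"
  then have "a t \<le> a (sig t)" using sig_props[OF t] t0_pos by (intro a_mono) auto
  then show False using sig_props[OF t] m_pos by simp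
qed

lemma tau_bounds: "t \<in> {t0..b} \<Longrightarrow> m / Rhi \<le> t - sig t \<and> t - sig t \<le> tmax"
proof -
  assume t: "t \<in> {t0..b}"
  have s: "sig t \<in> {0..b}" "a (sig t) = a t - m" "sig t < t" using sig_props[OF t] sig_lt[OF t] by auto
  have "a t - a (sig t) \<ge> Rlo * (t - sig t) \<and> a t - a (sig t) \<le> Rhi * (t - sig t)"
    using a_bounds[of "sig t" t] s t by auto
  then have "m \<ge> Rlo * (t - sig t)" "m \<le> Rhi * (t - sig t)" using s by auto
  then show ?thesis unfolding tmax_def using Rlo_pos Rhi_pos
    by (auto simp: pos_divide_le_eq pos_le_divide_eq mult.commute)
qed

lemma sig_t0: "sig t0 = 0"
  unfolding sig_def using at0 a0 ainv_a[of 0] b_pos by simp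

lemma sig_pos: "t \<in> {t0<..b} \<Longrightarrow> sig t > 0"
proof (rule ccontr)
  assume t: "t \<in> {t0<..b}" and "\<not> sig t > 0"
  then have "sig t = 0" using sig_props[of t] by auto
  then have "a t = m" using sig_props[of t] a0 t by auto
  moreover have "a t0 < a t" using a_strict[of t0 t] t t0_pos by auto
  ultimately show False using at0 by simp
qed

lemma tdelay_eq: "t \<in> {t0..b} \<Longrightarrow> tdelay R P 0 t m = t - sig t"
  unfolding tdelay_def
proof (rule the_equality)
  assume t: "t \<in> {t0..b}"
  have s: "sig t \<in> {0..b}" "a (sig t) = a t - m" "sig t < t" using sig_props[OF t] sig_lt[OF t] by auto
  show "t - sig t \<in> {0..t - 0} \<and> integral {t - (t - sig t)..t} (\<lambda>u. R (P u)) = m"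
    using s a_diff[of "sig t" t] t by auto
  fix T assume T: "T \<in> {0..t - 0} \<and> integral {t - T..t} (\<lambda>u. R (P u)) = m"
  then have "a t - a (t - T) = m" using a_diff[of "t - T" t] t by auto
  then have "a (t - T) = a (sig t)" using s by simp
  then have "t - T = sig t" by (rule inj_onD[OF a_inj]) (use s T t in auto)
  then show "T = t - sig t" by simp
qed

lemma sig_cont: "continuous_on {t0..b} sig"
proof -
  have c: "continuous_on {t0..b} (\<lambda>t. a t - m)"
    using continuous_on_subset[OF a_cont, of "{t0..b}"] t0_pos by (auto intro!: continuous_intros)
  have "continuous_on {t0..b} (\<lambda>t. ainv (a t - m))"
    by (rule continuous_on_compose2[OF ainv_cont c]) (use am_range in auto)
  then show ?thesis unfolding sig_def[abs_def] .
qed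

lemma a_der_at: "t \<in> {0<..<b} \<Longrightarrow> (a has_real_derivative R (P t)) (at t)"
proof -
  assume t: "t \<in> {0<..<b}"
  then have "at t within {0..b} = at t" by (intro at_within_interior) auto
  then show ?thesis using a_der[of t] t by auto
qed

lemma sig_der: "t \<in> {t0<..<b} \<Longrightarrow> (sig has_real_derivative R (P t) / R (P (sig t))) (at t)"
proof -
  assume t: "t \<in> {t0<..<b}"
  have tt: "t \<in> {t0..b}" using t by auto
  define y0 where "y0 = a t - m"
  have s: "sig t \<in> {0..b}" "a (sig t) = a t - m" "sig t < t" "sig t > 0"
    using sig_props[OF tt] sig_lt[OF tt] sig_pos[of t] t by auto
  have ai: "ainv y0 = sig t" unfolding y0_def sig_def by simp
  have d1: "(a has_real_derivative R (P (ainv y0))) (at (ainv y0))"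
    unfolding ai using s t by (intro a_der_at) auto
  have y0r: "0 < y0" "y0 < a b"
    using a_strict[of 0 "sig t"] a_strict[of "sig t" b] s t a0 unfolding y0_def by auto
  have ic: "isCont ainv y0"
    using ainv_cont y0r by (intro continuous_on_interior[of "{0..a b}"]) auto
  have d2: "(ainv has_real_derivative inverse (R (P (ainv y0)))) (at y0)"
  proof (rule DERIV_inverse_function[where f=a and g=ainv and x=y0 and D="R (P (ainv y0))" and a=0 and b="a b"])
    show "(a has_real_derivative R (P (ainv y0))) (at (ainv y0))" by (rule d1)
    show "R (P (ainv y0)) \<noteq> 0" unfolding ai using RP_pos[of "sig t"] s by simp
    show "0 < y0" "y0 < a b" by (rule y0r(1), rule y0r(2))
    show "isCont ainv y0" by (rule ic)
    fix y :: real assume "0 < y" "y < a b"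
    then show "a (ainv y) = y" using ainv[of y] by simp
  qed
  have tin: "t \<in> {0<..<b}" using t t0_pos by auto
  have d3: "((\<lambda>t. a t - m) has_real_derivative R (P t) - 0) (at t)"
    by (rule DERIV_diff[OF a_der_at[OF tin] DERIV_const])
  have "((\<lambda>t. ainv (a t - m)) has_real_derivative inverse (R (P (ainv y0))) * R (P t)) (at t)"
    using DERIV_chain2[OF d2[unfolded y0_def] d3] unfolding y0_def by simp
  moreover have "inverse (R (P (ainv y0))) * R (P t) = R (P t) / R (P (sig t))"
    unfolding ai by (simp add: divide_inverse)
  moreover have "sig = (\<lambda>t. ainv (a t - m))" unfolding sig_def[abs_def] by simp
  ultimately show ?thesis by simp
qed

end


lemma first_hit:
  fixes D :: "real \<Rightarrow> real"
  assumes "t0 < ts" "D ts \<ge> 0" "\<forall>u\<in>{t0..<ts}. D u < 0"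
    "(D has_real_derivative d) (at ts within {t0..})" "d < 0"
  shows False
proof -
  obtain e where e: "e > 0" "\<forall>h>0. ts - h \<in> {t0..} \<longrightarrow> h < e \<longrightarrow> D ts < D (ts - h)"
    using has_real_derivative_neg_dec_left[OF assms(4,5)] by blast
  define h where "h = min (e / 2) (ts - t0)"
  have h: "h > 0" "h < e" "ts - h \<in> {t0..}" "ts - h \<in> {t0..<ts}"
    unfolding h_def using e assms(1) by auto
  have "D ts < D (ts - h)" using e h by blast
  moreover have "D (ts - h) < 0" using assms(3) h by blast
  ultimately show False using assms(2) by simp
qed

lemma first_time:
  fixes F :: "real \<Rightarrow> real"
  assumes cont: "continuous_on {t0..b} F" and F0: "F t0 < 0" and t: "t \<in> {t0..b}" and Ft: "F t \<ge> 0"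
  shows "\<exists>ts\<in>{t0<..b}. F ts \<ge> 0 \<and> (\<forall>u\<in>{t0..<ts}. F u < 0)"
proof -
  define S where "S = {t0..b} \<inter> F -` {0..}"
  have clS: "closed S" unfolding S_def by (rule continuous_closed_preimage[OF cont]) auto
  have tS: "t \<in> S" unfolding S_def using t Ft by auto
  have bdd: "bdd_below S" unfolding S_def by (rule bdd_belowI[of _ t0]) auto
  define ts where "ts = Inf S"
  have tsS: "ts \<in> S" unfolding ts_def using closed_contains_Inf[OF _ bdd clS] tS by auto
  have tsr: "t0 \<le> ts" "ts \<le> b" "F ts \<ge> 0" using tsS unfolding S_def by auto
  have below: "\<forall>u\<in>{t0..<ts}. F u < 0"
  proof
    fix u assume u: "u \<in> {t0..<ts}"
    show "F u < 0"
    proof (rule ccontr)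
      assume "\<not> F u < 0"
      then have "u \<in> S" unfolding S_def using u tsr by auto
      then have "ts \<le> u" unfolding ts_def using bdd by (rule cInf_lower)
      then show False using u by simp
    qed
  qed
  have "t0 < ts" using tsr F0 by (cases "t0 = ts") auto
  then show ?thesis using tsr below by auto
qed

context tde_sol
begin

definition "fac t = R (P t) * exp (- del0 * (t - sig t)) * (gam * g * h (P (sig t)) / R (P (sig t)))"

lemma dZ': "t \<in> {t0..b} \<Longrightarrow> (Z has_real_derivative (fac t * Z (sig t) - del * Z t)) (at t within {t0..})"
proof -
  assume t: "t \<in> {t0..b}"
  have s: "sig t \<in> {0..b}" using sig_props[OF t] by auto
  have "R (P t) * exp (- del0 * (t - sig t)) * (gam * g * Z (sig t) * h (P (sig t)) / R (P (sig t)))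
        = fac t * Z (sig t)" unfolding fac_def using RP_pos[OF s] by (simp add: field_simps)
  then show ?thesis using dZ[of t] tdelay_eq[OF t] t by (simp add: Let_def)
qed

lemma fac_bounds: "t \<in> {t0..b} \<Longrightarrow> 0 \<le> fac t \<and> fac t \<le> kk"
proof -
  assume t: "t \<in> {t0..b}"
  have s: "sig t \<in> {0..b}" using sig_props[OF t] by auto
  have tb: "t \<in> {0..b}" using t t0_pos by auto
  have tau: "m / Rhi \<le> t - sig t" using tau_bounds[OF t] by auto
  have r1: "R (P t) / R (P (sig t)) \<le> Rhi / Rlo"
    using RP_hi[OF tb] RP_lo[OF s] RP_pos[OF s] Rhi_pos Rlo_pos by (intro frac_le) auto
  have r1n: "R (P t) / R (P (sig t)) \<ge> 0" using RP_pos[OF s] RP_pos[OF tb] by simp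
  have e1: "exp (- del0 * (t - sig t)) \<le> exp (- del0 * m / Rhi)"
    using mult_left_mono[OF tau del0_nn] by simp
  have h1: "h (P (sig t)) \<le> hmax" "h (P (sig t)) \<ge> 0" using hP_hi[OF s] hP_nn[OF s] by auto
  have eq: "fac t = (R (P t) / R (P (sig t))) * exp (- del0 * (t - sig t)) * (gam * g) * h (P (sig t))"
    unfolding fac_def by (simp add: field_simps)
  have gg: "gam * g > 0" using gam_pos g_pos by simp
  have A: "(R (P t) / R (P (sig t))) * exp (- del0 * (t - sig t)) \<le> (Rhi / Rlo) * exp (- del0 * m / Rhi)"
    using r1 e1 r1n by (intro mult_mono) auto
  have B: "(R (P t) / R (P (sig t))) * exp (- del0 * (t - sig t)) * (gam * g) \<le> (Rhi / Rlo) * exp (- del0 * m / Rhi) * (gam * g)"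
    by (rule mult_right_mono[OF A]) (use gg in simp)
  have nn: "0 \<le> (Rhi / Rlo) * exp (- del0 * m / Rhi) * (gam * g)" using Rhi_pos Rlo_pos gg by simp
  have "fac t \<le> (Rhi / Rlo) * exp (- del0 * m / Rhi) * (gam * g) * hmax"
    unfolding eq by (rule mult_mono[OF B h1(1) nn h1(2)])
  moreover have "fac t \<ge> 0" unfolding eq using h1 r1n gam_pos g_pos by (intro mult_nonneg_nonneg) auto
  ultimately show ?thesis unfolding kk_def by simp
qed

lemma Z_init_bound: "u \<in> {0..t0} \<Longrightarrow> \<bar>Z u\<bar> < r * exp (- \<alpha> * (u - t0))"
proof -
  assume u: "u \<in> {0..t0}"
  have "\<bar>Z u\<bar> < r" using init_eq[OF u] init u by auto
  moreover have "exp (- \<alpha> * (u - t0)) \<ge> 1" using u alpha_pos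
    by (simp add: mult_nonneg_nonpos)
  then have "r * 1 \<le> r * exp (- \<alpha> * (u - t0))" using r_pos by (intro mult_left_mono) auto
  ultimately show ?thesis by linarith
qed

lemma Z_rate: "t \<in> {t0..b} \<Longrightarrow> \<bar>Z t\<bar> < r * exp (- \<alpha> * (t - t0))"
proof (rule ccontr)
  define B where "B t = r * exp (- \<alpha> * (t - t0))" for t
  assume t: "t \<in> {t0..b}" and nt: "\<not> \<bar>Z t\<bar> < r * exp (- \<alpha> * (t - t0))"
  define S where "S = {t0..b} \<inter> (\<lambda>u. \<bar>Z u\<bar> - B u) -` {0..}"
  have cZ: "continuous_on {t0..b} Z" by (rule continuous_on_subset[OF Z_cont]) (use t0_pos in auto)
  have cS: "continuous_on {t0..b} (\<lambda>u. \<bar>Z u\<bar> - B u)"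
    unfolding B_def by (auto intro!: continuous_intros cZ)
  have clS: "closed S" unfolding S_def by (rule continuous_closed_preimage[OF cS]) auto
  have tS: "t \<in> S" unfolding S_def B_def using t nt by auto
  have bdd: "bdd_below S" unfolding S_def by (rule bdd_belowI[of _ t0]) auto
  define ts where "ts = Inf S"
  have tsS: "ts \<in> S" unfolding ts_def using closed_contains_Inf[OF _ bdd clS] tS by auto
  have tsr: "t0 \<le> ts" "ts \<le> b" "\<bar>Z ts\<bar> \<ge> B ts" using tsS unfolding S_def by auto
  have below: "\<forall>u\<in>{t0..<ts}. \<bar>Z u\<bar> < B u"
  proof
    fix u assume u: "u \<in> {t0..<ts}"
    show "\<bar>Z u\<bar> < B u"
    proof (rule ccontr)
      assume "\<not> \<bar>Z u\<bar> < B u"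
      then have "u \<in> S" unfolding S_def using u tsr by auto
      then have "ts \<le> u" unfolding ts_def using bdd by (rule cInf_lower)
      then show False using u by simp
    qed
  qed
  have Zt0: "\<bar>Z t0\<bar> < B t0" using Z_init_bound[of t0] t0_pos unfolding B_def by auto
  have ts_gt: "t0 < ts" using tsr Zt0 by (cases "t0 = ts") auto
  have tsb: "ts \<in> {t0..b}" using tsr by auto
  define \<sigma> where "\<sigma> = sig ts"
  have sg: "\<sigma> \<in> {0..b}" "\<sigma> < ts" "ts - \<sigma> \<le> tmax" using sig_props[OF tsb] sig_lt[OF tsb] tau_bounds[OF tsb]
    unfolding \<sigma>_def by auto
  have Zsig: "\<bar>Z \<sigma>\<bar> \<le> B \<sigma>"
  proof (cases "\<sigma> < t0")
    case True
    then show ?thesis using Z_init_bound[of \<sigma>] sg unfolding B_def by auto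
  next
    case False
    then have "\<sigma> \<in> {t0..<ts}" using sg by auto
    then show ?thesis using below by fastforce
  qed
  have Bpos: "B ts > 0" unfolding B_def using r_pos by simp
  have Bsig: "B \<sigma> \<le> B ts * exp (\<alpha> * tmax)"
  proof -
    have e: "- \<alpha> * (\<sigma> - t0) = - \<alpha> * (ts - t0) + \<alpha> * (ts - \<sigma>)" by (simp add: algebra_simps)
    have "B \<sigma> = r * (exp (- \<alpha> * (ts - t0)) * exp (\<alpha> * (ts - \<sigma>)))" unfolding B_def
      by (simp only: e exp_add)
    then have "B \<sigma> = B ts * exp (\<alpha> * (ts - \<sigma>))" unfolding B_def by (simp only: mult.assoc)
    also have "\<dots> \<le> B ts * exp (\<alpha> * tmax)"
      using sg alpha_pos Bpos by (intro mult_left_mono) auto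
    finally show ?thesis .
  qed
  have fb: "0 \<le> fac ts" "fac ts \<le> kk" using fac_bounds[OF tsb] by auto
  have mat: "\<bar>fac ts * Z \<sigma>\<bar> \<le> kk * (B ts * exp (\<alpha> * tmax))"
  proof -
    have "\<bar>fac ts * Z \<sigma>\<bar> = fac ts * \<bar>Z \<sigma>\<bar>" using fb by (simp add: abs_mult)
    also have "\<dots> \<le> kk * B \<sigma>" using fb Zsig kk_nn by (intro mult_mono) auto
    also have "\<dots> \<le> kk * (B ts * exp (\<alpha> * tmax))" using Bsig kk_nn by (intro mult_left_mono) auto
    finally show ?thesis .
  qed
  have key: "\<alpha> * B ts + kk * (B ts * exp (\<alpha> * tmax)) - del * B ts < 0"
  proof -
    have "(\<alpha> + kk * exp (\<alpha> * tmax) - del) * B ts < 0"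
      using alpha_cond' Bpos by (intro mult_neg_pos) auto
    then show ?thesis by (simp add: algebra_simps)
  qed
  have dB: "(B has_real_derivative (- \<alpha> * B ts)) (at ts within {t0..})"
    unfolding B_def by (auto intro!: derivative_eq_intros)
  have dz: "(Z has_real_derivative (fac ts * Z \<sigma> - del * Z ts)) (at ts within {t0..})"
    using dZ'[OF tsb] unfolding \<sigma>_def .
  show False
  proof (cases "Z ts \<ge> 0")
    case True
    have "((\<lambda>u. Z u - B u) has_real_derivative (fac ts * Z \<sigma> - del * Z ts) - (- \<alpha> * B ts)) (at ts within {t0..})"
      by (rule DERIV_diff[OF dz dB])
    moreover have "(fac ts * Z \<sigma> - del * Z ts) - (- \<alpha> * B ts) < 0"
    proof -
      have "del * Z ts \<ge> del * B ts" using True tsr del_pos by (intro mult_left_mono) auto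
      moreover have "fac ts * Z \<sigma> \<le> kk * (B ts * exp (\<alpha> * tmax))" using mat by (rule abs_le_D1)
      ultimately show ?thesis using key by linarith
    qed
    moreover have "Z ts - B ts \<ge> 0" using True tsr by auto
    moreover have "\<forall>u\<in>{t0..<ts}. Z u - B u < 0" using below by fastforce
    ultimately show False using first_hit[OF ts_gt, where D="\<lambda>u. Z u - B u"] by auto
  next
    case False
    have "((\<lambda>u. - Z u - B u) has_real_derivative - (fac ts * Z \<sigma> - del * Z ts) - (- \<alpha> * B ts)) (at ts within {t0..})"
      by (rule DERIV_diff[OF DERIV_minus[OF dz] dB])
    moreover have "- (fac ts * Z \<sigma> - del * Z ts) - (- \<alpha> * B ts) < 0"
    proof -
      have "del * (- Z ts) \<ge> del * B ts" using False tsr del_pos by (intro mult_left_mono) auto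
      moreover have "- (fac ts * Z \<sigma>) \<le> kk * (B ts * exp (\<alpha> * tmax))" using mat by (rule abs_le_D2)
      ultimately show ?thesis using key by linarith
    qed
    moreover have "- Z ts - B ts \<ge> 0" using False tsr by auto
    moreover have "\<forall>u\<in>{t0..<ts}. - Z u - B u < 0" using below by fastforce
    ultimately show False using first_hit[OF ts_gt, where D="\<lambda>u. - Z u - B u"] by auto
  qed
qed

lemma Z_rate_all: "u \<in> {0..b} \<Longrightarrow> \<bar>Z u\<bar> \<le> r * exp (- \<alpha> * (u - t0))"
  using Z_rate[of u] Z_init_bound[of u] by (cases "u \<le> t0") auto


definition "w u = gam * g * Z u * h (P u)"
definition "E u = exp (del0 * u) * w u"
definition "G x = integral {0..x} E"
definition "I t = exp (- del0 * t) * (G t - G (sig t))"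

lemma w_cont: "continuous_on {0..b} w"
  unfolding w_def[abs_def] using Z_cont hP_cont by (auto intro!: continuous_intros)
lemma E_cont: "continuous_on {0..b} E"
  unfolding E_def[abs_def] using w_cont by (auto intro!: continuous_intros)

lemma G_der: "x \<in> {0..b} \<Longrightarrow> (G has_real_derivative E x) (at x within {0..b})"
  unfolding G_def[abs_def] by (rule integral_has_real_derivative[OF E_cont])
lemma G_der_at: "x \<in> {0<..<b} \<Longrightarrow> (G has_real_derivative E x) (at x)"
proof -
  assume x: "x \<in> {0<..<b}"
  then have "at x within {0..b} = at x" by (intro at_within_interior) auto
  then show ?thesis using G_der[of x] x by auto
qed
lemma G_cont: "continuous_on {0..b} G"
  unfolding continuous_on_eq_continuous_within using G_der DERIV_continuous by blast
lemma G_diff: "0 \<le> x \<Longrightarrow> x \<le> y \<Longrightarrow> y \<le> b \<Longrightarrow> G y - G x = integral {x..y} E"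
proof -
  assume xy: "0 \<le> x" "x \<le> y" "y \<le> b"
  have "continuous_on {0..y} E" by (rule continuous_on_subset[OF E_cont]) (use xy in auto)
  then have "E integrable_on {0..y}" by (rule integrable_continuous_real)
  from Henstock_Kurzweil_Integration.integral_combine[OF xy(1,2) this] show ?thesis unfolding G_def by simp
qed
lemma G0: "G 0 = 0" unfolding G_def by simp

lemma sig_img: "sig ` {t0..b} \<subseteq> {0..b}" using sig_props by auto

lemma I_cont: "continuous_on {t0..b} I"
proof -
  have c1: "continuous_on {t0..b} G" by (rule continuous_on_subset[OF G_cont]) (use t0_pos in auto)
  have c2: "continuous_on {t0..b} (\<lambda>t. G (sig t))" by (rule continuous_on_compose2[OF G_cont sig_cont sig_img])
  show ?thesis unfolding I_def[abs_def] using c1 c2 by (auto intro!: continuous_intros)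
qed

lemma I_der: "t \<in> {t0<..<b} \<Longrightarrow> (I has_real_derivative (- del0 * I t + w t - fac t * Z (sig t))) (at t)"
proof -
  assume t: "t \<in> {t0<..<b}"
  have tt: "t \<in> {t0..b}" using t by auto
  have s: "sig t \<in> {0..b}" "sig t < t" "sig t > 0" using sig_props[OF tt] sig_lt[OF tt] sig_pos[of t] t by auto
  have d1: "(G has_real_derivative E t) (at t)" using t t0_pos by (intro G_der_at) auto
  have d2: "((\<lambda>t. G (sig t)) has_real_derivative E (sig t) * (R (P t) / R (P (sig t)))) (at t)"
    by (rule DERIV_chain2[OF G_der_at sig_der[OF t]]) (use s t in auto)
  have d3: "(I has_real_derivative
      exp (- del0 * t) * (E t - E (sig t) * (R (P t) / R (P (sig t)))) + (exp (- del0 * t) * (- del0)) * (G t - G (sig t))) (at t)"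
  proof -
    have dexp: "((\<lambda>t. exp (- del0 * t)) has_real_derivative exp (- del0 * t) * (- del0)) (at t)"
      by (auto intro!: derivative_eq_intros)
    show ?thesis unfolding I_def[abs_def] by (rule DERIV_mult'[OF dexp DERIV_diff[OF d1 d2]])
  qed
  have e1: "exp (- del0 * t) * E t = w t" unfolding E_def by (simp add: mult_exp_exp flip: mult.assoc exp_add)
  have e2: "exp (- del0 * t) * (E (sig t) * (R (P t) / R (P (sig t)))) = fac t * Z (sig t)"
  proof -
    have "exp (- del0 * t) * exp (del0 * sig t) = exp (- del0 * (t - sig t))"
      by (simp add: algebra_simps flip: exp_add)
    then show ?thesis unfolding E_def w_def fac_def
      by (simp add: field_simps)
  qed
  have "exp (- del0 * t) * (E t - E (sig t) * (R (P t) / R (P (sig t)))) + (exp (- del0 * t) * (- del0)) * (G t - G (sig t))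
      = - del0 * I t + w t - fac t * Z (sig t)"
    unfolding I_def using e1 e2 by (simp add: algebra_simps)
  then show ?thesis using d3 by simp
qed


lemma at_t0: "t > t0 \<Longrightarrow> at t within {t0..} = at t"
  by (intro at_within_interior) auto

lemma T_der: "t \<in> {t0<..<b} \<Longrightarrow>
  ((\<lambda>t. N t + P t + Z t + I t) has_real_derivative del0 * (NT - (N t + P t + Z t + I t))) (at t)"
proof -
  assume t: "t \<in> {t0<..<b}"
  have tt: "t \<in> {t0..b}" "t \<ge> t0" "t > t0" using t by auto
  have d: "((\<lambda>t. N t + P t + Z t + I t) has_real_derivative
     (- mu * P t * f (N t) + lam * P t + del * Z t + (1 - gam) * g * Z t * h (P t)
            + del0 * (NT - N t - P t - Z t))
     + (mu * P t * f (N t) - lam * P t - g * Z t * h (P t))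
     + (fac t * Z (sig t) - del * Z t)
     + (- del0 * I t + w t - fac t * Z (sig t))) (at t)"
    using dN[OF tt(2)] dP[OF tt(2)] dZ'[OF tt(1)] I_der[OF t] at_t0[OF tt(3)]
    by (intro DERIV_add) auto
  show ?thesis by (rule DERIV_cong[OF d]) (simp add: w_def algebra_simps)
qed

lemma T_t0: "N t0 + P t0 + Z t0 + I t0 = \<phi>1 0 + \<phi>2 0 + \<phi>3 0 + exp (- del0 * t0) * G t0"
  using init_eq[of t0] t0_pos unfolding I_def by (simp add: sig_t0 G0)

lemma ainv_le_t0: "y \<in> {0..m} \<Longrightarrow> ainv y \<in> {0..t0}"
proof -
  assume y: "y \<in> {0..m}"
  have yy: "y \<in> {0..a b}" using y at0 a_mono[of t0 b] b_ge t0_pos by auto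
  have ai: "ainv y \<in> {0..b}" "a (ainv y) = y" using ainv[OF yy] by auto
  have "ainv y \<le> t0"
  proof (rule ccontr)
    assume "\<not> ainv y \<le> t0"
    then have "a t0 < a (ainv y)" using ai t0_pos by (intro a_strict) auto
    then show False using ai y at0 by auto
  qed
  then show ?thesis using ai by auto
qed

lemma tdelay_init: "s \<in> {0..m} \<Longrightarrow> tdelay R \<phi>2 (-t0) 0 s = t0 - ainv (m - s)"
  unfolding tdelay_def
proof (rule the_equality)
  assume s: "s \<in> {0..m}"
  define x where "x = ainv (m - s)"
  have ms: "m - s \<in> {0..m}" "m - s \<in> {0..a b}" using s at0 a_mono[of t0 b] b_ge t0_pos by auto
  have x: "x \<in> {0..t0}" "a x = m - s" using ainv_le_t0[OF ms(1)] ainv[OF ms(2)] unfolding x_def by auto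
  have "integral {x..t0} (\<lambda>u. R (P u)) = s" using a_diff[of x t0] x b_ge at0 by auto
  then have "integral {x - t0..0} (\<lambda>u. R (\<phi>2 u)) = s" using shift_int[of x t0] x by auto
  then show "t0 - ainv (m - s) \<in> {0..0 - - t0} \<and> integral {0 - (t0 - ainv (m - s))..0} (\<lambda>u. R (\<phi>2 u)) = s"
    using x unfolding x_def by auto
  fix T assume T: "T \<in> {0..0 - - t0} \<and> integral {0 - T..0} (\<lambda>u. R (\<phi>2 u)) = s"
  define y where "y = t0 - T"
  have yr: "y \<in> {0..t0}" using T unfolding y_def by auto
  have "integral {y..t0} (\<lambda>u. R (P u)) = s" using shift_int[of y t0] yr T unfolding y_def by auto
  then have "a y = m - s" using a_diff[of y t0] yr b_ge at0 by auto
  then have "ainv (m - s) = y" using ainv_a[of y] yr b_ge by auto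
  then show "T = t0 - ainv (m - s)" unfolding y_def by simp
qed

definition "Fin s = (let T = tdelay R \<phi>2 (-t0) 0 s in
          exp (- del0 * T) * gam * g * \<phi>3 (-T) * h (\<phi>2 (-T)) / R (\<phi>2 (-T)))"
definition "Psi u = exp (- del0 * (t0 - u)) * gam * g * Z u * h (P u) / R (P u)"

lemma Fin_eq: "s \<in> {0..m} \<Longrightarrow> Fin s = Psi (ainv (m - s))"
proof -
  assume s: "s \<in> {0..m}"
  define x where "x = ainv (m - s)"
  have ms: "m - s \<in> {0..m}" using s by auto
  have x: "x \<in> {0..t0}" using ainv_le_t0[OF ms] unfolding x_def by auto
  have "Fin s = exp (- del0 * (t0 - x)) * gam * g * \<phi>3 (x - t0) * h (\<phi>2 (x - t0)) / R (\<phi>2 (x - t0))"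
    unfolding Fin_def tdelay_init[OF s] x_def[symmetric] by (simp add: Let_def)
  also have "\<dots> = Psi x" unfolding Psi_def using init_eq[OF x] by simp
  finally show ?thesis unfolding x_def .
qed

lemma Psi_cont: "continuous_on {0..t0} Psi"
proof -
  have sub: "{0..t0} \<subseteq> {0..b}" using b_ge by auto
  have c1: "continuous_on {0..t0} Z" "continuous_on {0..t0} (\<lambda>u. h (P u))" "continuous_on {0..t0} (\<lambda>u. R (P u))"
    using continuous_on_subset[OF Z_cont sub] continuous_on_subset[OF hP_cont sub] continuous_on_subset[OF RP_cont sub] by auto
  have nz: "\<forall>u\<in>{0..t0}. R (P u) \<noteq> 0" using RP_pos sub by force
  show ?thesis unfolding Psi_def[abs_def] using c1 nz by (auto intro!: continuous_intros)
qed

lemma Fin_cont: "continuous_on {0..m} Fin"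
proof -
  have c0: "continuous_on {0..m} (\<lambda>s. m - s)" by (auto intro!: continuous_intros)
  have mab: "m \<le> a b" using at0 a_mono[of t0 b] b_ge t0_pos by auto
  have c1: "continuous_on {0..m} (\<lambda>s. ainv (m - s))"
    by (rule continuous_on_compose2[OF ainv_cont c0]) (use mab in auto)
  have c2: "continuous_on {0..m} (\<lambda>s. Psi (ainv (m - s)))"
    by (rule continuous_on_compose2[OF Psi_cont c1]) (use ainv_le_t0 in force)
  show ?thesis using continuous_on_cong[of "{0..m}" "{0..m}" Fin "\<lambda>s. Psi (ainv (m - s))"] c2 Fin_eq by auto
qed

lemma I_t0: "exp (- del0 * t0) * G t0 = integral {0..m} Fin"
proof -
  have sub: "{0..t0} \<subseteq> {0..b}" using b_ge by auto
  have img: "(\<lambda>u. m - a u) ` {0..t0} \<subseteq> {0..m}"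
    using a_mono[of 0 _] a_mono[of _ t0] a0 at0 b_ge by force
  have cg: "continuous_on {0..t0} (\<lambda>u. m - a u)"
    using continuous_on_subset[OF a_cont sub] by (auto intro!: continuous_intros)
  have dg: "((\<lambda>u. m - a u) has_real_derivative - R (P u)) (at u within {0..t0})" if u: "u \<in> {0..t0}" for u
  proof -
    have "(a has_real_derivative R (P u)) (at u within {0..t0})"
      using DERIV_subset[OF a_der sub] u sub by auto
    from DERIV_diff[OF DERIV_const this] show ?thesis by simp
  qed
  have "((\<lambda>u. - R (P u) *\<^sub>R Fin (m - a u)) has_integral
      (integral {m - a 0..m - a t0} Fin - integral {m - a t0..m - a 0} Fin)) {0..t0}"
    by (rule has_integral_substitution_general[of "{}" 0 t0 "\<lambda>u. m - a u" 0 m Fin]) (use t0_pos img Fin_cont cg dg in auto)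
  then have h1: "((\<lambda>u. - R (P u) * Fin (m - a u)) has_integral (- integral {0..m} Fin)) {0..t0}"
    using a0 at0 m_pos by simp
  have h2: "((\<lambda>u. exp (- del0 * t0) * E u) has_integral integral {0..m} Fin) {0..t0}"
  proof -
    have A: "((\<lambda>u. - (- R (P u) * Fin (m - a u))) has_integral integral {0..m} Fin) {0..t0}"
      using has_integral_neg[OF h1] by simp
    have B: "- (- R (P u) * Fin (m - a u)) = exp (- del0 * t0) * E u" if u: "u \<in> {0..t0}" for u
    proof -
      have au: "a u \<in> {0..m}" using a_mono[of 0 u] a_mono[of u t0] a0 at0 u b_ge by auto
      have "Fin (m - a u) = Psi u" using Fin_eq[of "m - a u"] au ainv_a[of u] u sub by auto
      moreover have "exp (- del0 * t0) * exp (del0 * u) = exp (- del0 * (t0 - u))"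
        by (simp add: algebra_simps flip: exp_add)
      moreover have "R (P u) > 0" using RP_pos u sub by auto
      ultimately show ?thesis unfolding Psi_def E_def w_def by (simp add: field_simps)
    qed
    show ?thesis by (rule iffD1[OF has_integral_cong[OF B] A])
  qed
  then have "integral {0..t0} (\<lambda>u. exp (- del0 * t0) * E u) = integral {0..m} Fin" by (rule integral_unique)
  then show ?thesis unfolding G_def by simp
qed

lemma T_init: "N t0 + P t0 + Z t0 + I t0 = NT"
  using T_t0 I_t0 NT_in unfolding Fin_def[abs_def] by simp

lemma T_const: "t \<in> {t0..b} \<Longrightarrow> N t + P t + Z t + I t = NT"
proof -
  assume t: "t \<in> {t0..b}"
  define U where "U t = exp (del0 * t) * (N t + P t + Z t + I t - NT)" for t
  have sub: "{t0..b} \<subseteq> {0..b}" using t0_pos by auto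
  have cU: "continuous_on {t0..b} U" unfolding U_def[abs_def]
    using continuous_on_subset[OF N_cont sub] continuous_on_subset[OF P_cont sub] continuous_on_subset[OF Z_cont sub] I_cont
    by (auto intro!: continuous_intros)
  have dU: "(U has_real_derivative 0) (at x)" if x: "x \<in> {t0<..<b}" for x
  proof -
    have dexp: "((\<lambda>t. exp (del0 * t)) has_real_derivative exp (del0 * x) * del0) (at x)"
      by (auto intro!: derivative_eq_intros)
    have dT: "((\<lambda>t. N t + P t + Z t + I t - NT) has_real_derivative del0 * (NT - (N x + P x + Z x + I x)) - 0) (at x)"
      by (rule DERIV_diff[OF T_der[OF x] DERIV_const])
    have "(U has_real_derivative exp (del0 * x) * (del0 * (NT - (N x + P x + Z x + I x)) - 0)
          + exp (del0 * x) * del0 * (N x + P x + Z x + I x - NT)) (at x)"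
      unfolding U_def[abs_def] by (rule DERIV_mult'[OF dexp dT])
    then show ?thesis by (rule DERIV_cong) (simp add: algebra_simps)
  qed
  have U0: "U t0 = 0" unfolding U_def using T_init by simp
  have "U t = 0"
  proof (cases "t = t0")
    case True then show ?thesis using U0 by simp
  next
    case False
    then have tl: "t0 < t" using t by auto
    have cU': "continuous_on {t0..t} U" by (rule continuous_on_subset[OF cU]) (use t in auto)
    have "U t0 \<le> U t"
      by (rule DERIV_nonneg_imp_increasing_open[OF less_imp_le[OF tl] _ cU']) (use dU t in force)
    moreover have "(\<lambda>x. - U x) t0 \<le> (\<lambda>x. - U x) t"
    proof (rule DERIV_nonneg_imp_increasing_open[OF less_imp_le[OF tl]])
      fix x assume "t0 < x" "x < t"
      then have "((\<lambda>x. - U x) has_real_derivative - 0) (at x)" using dU[of x] t by (intro DERIV_minus) auto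
      then show "\<exists>y. ((\<lambda>x. - U x) has_real_derivative y) (at x) \<and> 0 \<le> y" by auto
    next
      show "continuous_on {t0..t} (\<lambda>x. - U x)" using cU' by (auto intro!: continuous_intros)
    qed
    ultimately show ?thesis using U0 by simp
  qed
  then show ?thesis unfolding U_def by simp
qed


lemma I_bound: "t \<in> {t0..b} \<Longrightarrow> \<bar>I t\<bar> \<le> C1 * r * exp (- \<alpha> * (t - t0))"
proof -
  assume t: "t \<in> {t0..b}"
  define \<sigma> where "\<sigma> = sig t"
  have sg: "\<sigma> \<in> {0..b}" "\<sigma> < t" "t - \<sigma> \<le> tmax" using sig_props[OF t] sig_lt[OF t] tau_bounds[OF t]
    unfolding \<sigma>_def by auto
  define X where "X = r * exp (- \<alpha> * (\<sigma> - t0))"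
  define K where "K = gam * g * hmax"
  have Kn: "K \<ge> 0" unfolding K_def using gam_pos g_pos hmax_pos by simp
  have Xn: "X \<ge> 0" unfolding X_def using r_pos by simp
  have It: "I t = exp (- del0 * t) * integral {\<sigma>..t} E"
    unfolding I_def \<sigma>_def[symmetric] using G_diff[of \<sigma> t] sg t by auto
  have Eb: "\<forall>u\<in>{\<sigma>..t}. \<bar>E u\<bar> \<le> exp (del0 * t) * (K * X)"
  proof
    fix u assume u: "u \<in> {\<sigma>..t}"
    have ub: "u \<in> {0..b}" using u sg t by auto
    have z: "\<bar>Z u\<bar> \<le> X"
    proof -
      have "\<bar>Z u\<bar> \<le> r * exp (- \<alpha> * (u - t0))" by (rule Z_rate_all[OF ub])
      also have "\<dots> \<le> X" unfolding X_def using u alpha_pos r_pos by (intro mult_left_mono) auto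
      finally show ?thesis .
    qed
    have hh: "0 \<le> h (P u)" "h (P u) \<le> hmax" using hP_nn[OF ub] hP_hi[OF ub] by auto
    have "\<bar>w u\<bar> = gam * g * h (P u) * \<bar>Z u\<bar>" unfolding w_def using hh gam_pos g_pos by (simp add: abs_mult)
    also have "\<dots> \<le> gam * g * hmax * X"
      using hh z gam_pos g_pos by (intro mult_mono) auto
    finally have wb: "\<bar>w u\<bar> \<le> K * X" unfolding K_def .
    have "\<bar>E u\<bar> = exp (del0 * u) * \<bar>w u\<bar>" unfolding E_def by (simp add: abs_mult)
    also have "\<dots> \<le> exp (del0 * t) * (K * X)"
      using wb u del0_nn by (intro mult_mono) (auto intro: mult_left_mono)
    finally show "\<bar>E u\<bar> \<le> exp (del0 * t) * (K * X)" .
  qed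
  have cE: "continuous_on {\<sigma>..t} E" by (rule continuous_on_subset[OF E_cont]) (use sg t in auto)
  have "\<bar>integral {\<sigma>..t} E\<bar> \<le> exp (del0 * t) * (K * X) * (t - \<sigma>)"
    using integral_abs_bound[OF cE _ Eb] sg by auto
  then have "\<bar>I t\<bar> \<le> exp (- del0 * t) * (exp (del0 * t) * (K * X) * (t - \<sigma>))"
    unfolding It by (simp add: abs_mult)
  also have "\<dots> = K * X * (t - \<sigma>)" by (simp add: mult_exp_exp flip: mult.assoc exp_add)
  also have "\<dots> \<le> K * (r * exp (- \<alpha> * (t - t0)) * exp (\<alpha> * tmax)) * tmax"
  proof -
    have e: "- \<alpha> * (\<sigma> - t0) = - \<alpha> * (t - t0) + \<alpha> * (t - \<sigma>)" by (simp add: algebra_simps)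
    have "X = r * (exp (- \<alpha> * (t - t0)) * exp (\<alpha> * (t - \<sigma>)))" unfolding X_def by (simp only: e exp_add)
    also have "\<dots> \<le> r * (exp (- \<alpha> * (t - t0)) * exp (\<alpha> * tmax))"
      using sg alpha_pos r_pos by (intro mult_left_mono) auto
    finally have "X \<le> r * exp (- \<alpha> * (t - t0)) * exp (\<alpha> * tmax)" by (simp add: mult.assoc)
    then have "K * X \<le> K * (r * exp (- \<alpha> * (t - t0)) * exp (\<alpha> * tmax))" using Kn by (rule mult_left_mono)
    then show ?thesis by (rule mult_mono) (use sg Kn r_pos in auto)
  qed
  also have "\<dots> = C1 * r * exp (- \<alpha> * (t - t0))" unfolding C1_def K_def by (simp add: algebra_simps)
  finally show ?thesis .
qed

lemma e_bound: "t \<in> {t0..b} \<Longrightarrow> \<bar>Z t + I t\<bar> \<le> (1 + C1) * r * exp (- \<alpha> * (t - t0))"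
  using Z_rate[of t] I_bound[of t] by (simp add: algebra_simps)

lemma exp_a'_le: "t \<ge> t0 \<Longrightarrow> exp (- \<alpha> * (t - t0)) \<le> exp (- alpha' * (t - t0))"
  using alpha'_le by (simp add: mult_right_mono)

lemma P_rate: "t \<in> {t0..b} \<Longrightarrow> \<bar>P t - P1\<bar> < C2 * r * exp (- alpha' * (t - t0))"
proof (rule ccontr)
  define Bp where "Bp t = C2 * r * exp (- alpha' * (t - t0))" for t
  assume t: "t \<in> {t0..b}" and nt: "\<not> \<bar>P t - P1\<bar> < C2 * r * exp (- alpha' * (t - t0))"
  have sub: "{t0..b} \<subseteq> {0..b}" using t0_pos by auto
  have cF: "continuous_on {t0..b} (\<lambda>u. \<bar>P u - P1\<bar> - Bp u)"
    unfolding Bp_def using continuous_on_subset[OF P_cont sub] by (auto intro!: continuous_intros)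
  have C2r: "C2 * r \<ge> r" using C2_ge(1) C1_nn r_pos by auto
  have F0: "\<bar>P t0 - P1\<bar> - Bp t0 < 0"
  proof -
    have "\<bar>\<phi>2 0 - P1\<bar> < r" using init t0_pos by auto
    then show ?thesis using init_eq[of t0] t0_pos C2r unfolding Bp_def by auto
  qed
  obtain ts where ts: "ts \<in> {t0<..b}" "\<bar>P ts - P1\<bar> - Bp ts \<ge> 0" "\<forall>u\<in>{t0..<ts}. \<bar>P u - P1\<bar> - Bp u < 0"
    using first_time[OF cF F0 t] nt unfolding Bp_def by auto
  have tsb: "ts \<in> {t0..b}" "t0 < ts" "ts \<ge> t0" using ts by auto
  have tsb0: "ts \<in> {0..b}" using tsb t0_pos by auto
  define x where "x = P ts - P1"
  define e where "e = Z ts + I ts"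
  define Bt where "Bt = Bp ts"
  have Btp: "Bt > 0" unfolding Bt_def Bp_def using C2_ge(1) C1_nn r_pos by auto
  have xb: "\<bar>x\<bar> \<ge> Bt" using ts unfolding x_def Bt_def by auto
  have ea: "exp (- \<alpha> * (ts - t0)) \<le> exp (- alpha' * (ts - t0))" using exp_a'_le tsb by auto
  have eb: "\<bar>e\<bar> \<le> Bt / 2"
  proof -
    have "\<bar>e\<bar> \<le> (1 + C1) * r * exp (- \<alpha> * (ts - t0))" unfolding e_def by (rule e_bound[OF tsb(1)])
    also have "\<dots> \<le> (1 + C1) * r * exp (- alpha' * (ts - t0))" using ea C1_nn r_pos by (intro mult_left_mono) auto
    also have "\<dots> \<le> (C2 / 2) * r * exp (- alpha' * (ts - t0))"
      using C2_ge(1) r_pos by (intro mult_right_mono) auto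
    finally show ?thesis unfolding Bt_def Bp_def by simp
  qed
  have zb: "g * hmax * \<bar>Z ts\<bar> \<le> beta / 2 * Bt"
  proof -
    have "\<bar>Z ts\<bar> \<le> r * exp (- alpha' * (ts - t0))" using Z_rate[OF tsb(1)] ea r_pos
      by (smt (verit) mult_left_mono)
    then have "g * hmax * \<bar>Z ts\<bar> \<le> g * hmax * (r * exp (- alpha' * (ts - t0)))"
      using g_pos hmax_pos by (intro mult_left_mono) auto
    also have "\<dots> = (g * hmax) * r * exp (- alpha' * (ts - t0))" by simp
    also have "\<dots> \<le> (beta / 2 * C2) * r * exp (- alpha' * (ts - t0))"
    proof -
      have "2 * g * hmax / beta \<le> C2" by (rule C2_ge(2))
      then have "g * hmax \<le> beta / 2 * C2" using beta_pos by (simp add: field_simps)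
      then show ?thesis using r_pos by (intro mult_right_mono) auto
    qed
    finally show ?thesis unfolding Bt_def Bp_def by simp
  qed
  have Nts: "N ts = N1 - x - e" using T_const[OF tsb(1)] NT_eq unfolding x_def e_def by simp
  have Nb': "\<bar>N ts - N1\<bar> \<le> \<eta>" using ball tsb(1) by blast
  have Nb: "N1 - \<eta> \<le> N ts" "N ts \<le> N1 + \<eta>" using Nb' by auto
  have Pb: "P ts \<ge> P1 - \<eta>" using P_lo[OF tsb0] .
  have Pe: "P1 - \<eta> > 0" using eta_P1 P1_pos eta_pos by simp
  have hb: "\<bar>g * Z ts * h (P ts)\<bar> \<le> g * hmax * \<bar>Z ts\<bar>"
  proof -
    have "\<bar>g * Z ts * h (P ts)\<bar> = g * h (P ts) * \<bar>Z ts\<bar>" using hP_nn[OF tsb0] g_pos by (simp add: abs_mult)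
    also have "\<dots> \<le> g * hmax * \<bar>Z ts\<bar>" using hP_hi[OF tsb0] g_pos by (intro mult_right_mono mult_left_mono) auto
    finally show ?thesis .
  qed
  define q where "q = mu * f (N ts) - lam"
  have q_eq: "q = mu * (f (N ts) - f N1)" unfolding q_def using fN1 mu_pos by (simp add: algebra_simps)
  have dp: "(P has_real_derivative (P ts * q - g * Z ts * h (P ts))) (at ts within {t0..})"
    using dP[OF tsb(3)] unfolding q_def by (simp add: algebra_simps)
  have dB: "(Bp has_real_derivative (- alpha' * Bt)) (at ts within {t0..})"
    unfolding Bp_def Bt_def by (auto intro!: derivative_eq_intros)
  have a'b: "alpha' \<le> beta / 4" by (rule alpha'_le(2))
  show False
  proof (cases "x \<ge> 0")
    case True
    then have xB: "x \<ge> Bt" using xb by auto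
    have le: "N ts \<le> N1" using Nts xB eb Btp by auto
    have "f N1 - f (N ts) \<ge> c * (N1 - N ts)" using slope Nb le eta_pos by auto
    moreover have "c * (N1 - N ts) \<ge> c * (Bt / 2)" using Nts xB eb c_pos by (intro mult_left_mono) auto
    ultimately have fd: "f (N ts) - f N1 \<le> - (c * (Bt / 2))" by linarith
    have "mu * (f (N ts) - f N1) \<le> mu * (- (c * (Bt / 2)))" by (rule mult_left_mono[OF fd]) (use mu_pos in linarith)
    then have q1: "q \<le> mu * (- (c * (Bt / 2)))" using q_eq by linarith
    have "mu * (c * (Bt / 2)) > 0" using mu_pos c_pos Btp by simp
    then have qn: "q \<le> 0" using q1 by linarith
    have "P ts * q \<le> (P1 - \<eta>) * q" using Pb qn by (rule mult_right_mono_neg)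
    also have "\<dots> \<le> (P1 - \<eta>) * (mu * (- (c * (Bt / 2))))" using q1 Pe by (intro mult_left_mono) auto
    also have "\<dots> = - beta * Bt" unfolding beta_def by (simp add: algebra_simps)
    finally have pq: "P ts * q \<le> - beta * Bt" .
    have "((\<lambda>u. P u - P1 - Bp u) has_real_derivative (P ts * q - g * Z ts * h (P ts)) - 0 - (- alpha' * Bt)) (at ts within {t0..})"
      by (rule DERIV_diff[OF DERIV_diff[OF dp DERIV_const] dB])
    moreover have "(P ts * q - g * Z ts * h (P ts)) - 0 - (- alpha' * Bt) < 0"
    proof -
      have "- (g * Z ts * h (P ts)) \<le> beta / 2 * Bt" using hb zb by (smt (verit) abs_le_D2)
      moreover have "alpha' * Bt \<le> beta / 4 * Bt" using a'b Btp by (intro mult_right_mono) auto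
      moreover have "beta * Bt > 0" using beta_pos Btp by simp
      ultimately show ?thesis using pq by linarith
    qed
    moreover have "P ts - P1 - Bp ts \<ge> 0" using xB unfolding x_def Bt_def by auto
    moreover have "\<forall>u\<in>{t0..<ts}. P u - P1 - Bp u < 0" using ts(3) by fastforce
    ultimately show False using first_hit[OF tsb(2), where D="\<lambda>u. P u - P1 - Bp u"] by auto
  next
    case False
    then have xB: "- x \<ge> Bt" using xb by auto
    have le: "N1 \<le> N ts" using Nts xB eb Btp by auto
    have "f (N ts) - f N1 \<ge> c * (N ts - N1)" using slope Nb le eta_pos by auto
    moreover have "c * (N ts - N1) \<ge> c * (Bt / 2)" using Nts xB eb c_pos by (intro mult_left_mono) auto
    ultimately have fd: "f (N ts) - f N1 \<ge> c * (Bt / 2)" by linarith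
    have "mu * (c * (Bt / 2)) \<le> mu * (f (N ts) - f N1)" by (rule mult_left_mono[OF fd]) (use mu_pos in linarith)
    then have q1: "q \<ge> mu * (c * (Bt / 2))" using q_eq by linarith
    have "mu * (c * (Bt / 2)) > 0" using mu_pos c_pos Btp by simp
    then have qn: "q \<ge> 0" using q1 by linarith
    have "P ts * q \<ge> (P1 - \<eta>) * q" using Pb qn by (rule mult_right_mono)
    moreover have "(P1 - \<eta>) * q \<ge> (P1 - \<eta>) * (mu * (c * (Bt / 2)))" using q1 Pe by (intro mult_left_mono) auto
    moreover have "(P1 - \<eta>) * (mu * (c * (Bt / 2))) = beta * Bt" unfolding beta_def by (simp add: algebra_simps)
    ultimately have pq: "P ts * q \<ge> beta * Bt" by linarith
    have "((\<lambda>u. - (P u - P1) - Bp u) has_real_derivative - ((P ts * q - g * Z ts * h (P ts)) - 0) - (- alpha' * Bt)) (at ts within {t0..})"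
      by (rule DERIV_diff[OF DERIV_minus[OF DERIV_diff[OF dp DERIV_const]] dB])
    moreover have "- ((P ts * q - g * Z ts * h (P ts)) - 0) - (- alpha' * Bt) < 0"
    proof -
      have "g * Z ts * h (P ts) \<le> beta / 2 * Bt" using hb zb by (smt (verit) abs_le_D1)
      moreover have "alpha' * Bt \<le> beta / 4 * Bt" using a'b Btp by (intro mult_right_mono) auto
      moreover have "beta * Bt > 0" using beta_pos Btp by simp
      ultimately show ?thesis using pq by linarith
    qed
    moreover have "- (P ts - P1) - Bp ts \<ge> 0" using xB unfolding x_def Bt_def by auto
    moreover have "\<forall>u\<in>{t0..<ts}. - (P u - P1) - Bp u < 0" using ts(3) by fastforce
    ultimately show False using first_hit[OF tsb(2), where D="\<lambda>u. - (P u - P1) - Bp u"] by auto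
  qed
qed

lemma N_rate: "t \<in> {t0..b} \<Longrightarrow> \<bar>N t - N1\<bar> < (C2 + 1 + C1) * r * exp (- alpha' * (t - t0))"
proof -
  assume t: "t \<in> {t0..b}"
  have eq: "N t - N1 = - (P t - P1) - (Z t + I t)" using T_const[OF t] NT_eq by linarith
  have "(1 + C1) * r * exp (- \<alpha> * (t - t0)) \<le> (1 + C1) * r * exp (- alpha' * (t - t0))"
    using exp_a'_le[of t] t C1_nn r_pos by (intro mult_left_mono) auto
  then have eb: "\<bar>Z t + I t\<bar> \<le> (1 + C1) * r * exp (- alpha' * (t - t0))"
    using e_bound[OF t] by linarith
  have pb: "\<bar>P t - P1\<bar> < C2 * r * exp (- alpha' * (t - t0))" by (rule P_rate[OF t])
  have "\<bar>N t - N1\<bar> < C2 * r * exp (- alpha' * (t - t0)) + (1 + C1) * r * exp (- alpha' * (t - t0))"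
    unfolding eq using eb pb by linarith
  then show ?thesis by (simp add: algebra_simps)
qed

end


lemma sol_cont:
  assumes sol: "tde_solution mu lam g gam del del0 m NT f h R t0 \<phi>1 \<phi>2 \<phi>3 N P Z"
  shows "continuous_on {t0..b} N \<and> continuous_on {t0..b} P \<and> continuous_on {t0..b} Z"
proof -
  have c: "continuous_on {t0..b} X" if d: "\<forall>t\<ge>t0. \<exists>D. (X has_real_derivative D) (at t within {t0..})" for X :: "real \<Rightarrow> real"
    unfolding continuous_on_eq_continuous_within
  proof
    fix t assume t: "t \<in> {t0..b}"
    then obtain D where "(X has_real_derivative D) (at t within {t0..})" using d by auto
    then have "continuous (at t within {t0..}) X" by (rule DERIV_continuous)
    then show "continuous (at t within {t0..b}) X" by (rule continuous_within_subset) auto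
  qed
  have "\<forall>t\<ge>t0. \<exists>D. (N has_real_derivative D) (at t within {t0..})"
       "\<forall>t\<ge>t0. \<exists>D. (P has_real_derivative D) (at t within {t0..})"
       "\<forall>t\<ge>t0. \<exists>D. (Z has_real_derivative D) (at t within {t0..})"
    using sol unfolding tde_solution_def by blast+
  then show ?thesis using c by blast
qed

context tde_eta
begin

lemma C3_ge: "C3 \<ge> 2" unfolding C3_def using C2_ge C1_nn by auto

lemma bootstrap:
  assumes inD: "in_D g gam del0 m NT t0 h R \<phi>1 \<phi>2 \<phi>3"
    and sol: "tde_solution mu lam g gam del del0 m NT f h R t0 \<phi>1 \<phi>2 \<phi>3 N P Z"
    and init: "\<forall>t\<in>{-t0..0}. \<bar>\<phi>1 t - N1\<bar> < \<eta> / (2 * C3) \<and> \<bar>\<phi>2 t - P1\<bar> < \<eta> / (2 * C3) \<and> \<bar>\<phi>3 t\<bar> < \<eta> / (2 * C3)"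
    and t: "t \<ge> t0"
  shows "\<bar>Z t\<bar> < \<eta> / (2 * C3) * exp (- \<alpha> * (t - t0)) \<and>
         \<bar>P t - P1\<bar> < C2 * (\<eta> / (2 * C3)) * exp (- alpha' * (t - t0)) \<and>
         \<bar>N t - N1\<bar> < (C2 + 1 + C1) * (\<eta> / (2 * C3)) * exp (- alpha' * (t - t0)) \<and>
         \<bar>N t - N1\<bar> < \<eta> / 2 \<and> \<bar>P t - P1\<bar> < \<eta> / 2 \<and> \<bar>Z t\<bar> < \<eta> / 2"
proof -
  define r where "r = \<eta> / (2 * C3)"
  have r_pos: "r > 0" unfolding r_def using eta_pos C3_pos by simp
  have "\<eta> / (2 * C3) \<le> \<eta> / (2 * 2)" by (rule divide_left_mono) (use eta_pos C3_ge in auto)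
  then have r_le4: "r \<le> \<eta> / 4" unfolding r_def by simp
  have r_le: "r \<le> \<eta>" using r_le4 eta_pos by simp
  have rC3: "C3 * r = \<eta> / 2" unfolding r_def using C3_pos by simp
  have t0p: "t0 > 0" using inD unfolding in_D_def by auto
  have init': "\<forall>t\<in>{-t0..0}. \<bar>\<phi>1 t - N1\<bar> < r \<and> \<bar>\<phi>2 t - P1\<bar> < r \<and> \<bar>\<phi>3 t\<bar> < r"
    using init unfolding r_def .
  have TS: "tde_sol mu lam g gam del del0 m NT f h R f' N1 P1 \<eta> \<alpha> c t0 r b \<phi>1 \<phi>2 \<phi>3 N P Z"
    if b: "t0 \<le> b" and bl: "\<forall>t\<in>{t0..b}. \<bar>N t - N1\<bar> \<le> \<eta> \<and> \<bar>P t - P1\<bar> \<le> \<eta> \<and> \<bar>Z t\<bar> \<le> \<eta>" for b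
    by (rule tde_sol.intro[OF tde_eta_axioms], unfold_locales)
       (use inD sol init' r_pos r_le b bl in auto)
  have rates: "\<bar>Z t\<bar> < r * exp (- \<alpha> * (t - t0)) \<and> \<bar>P t - P1\<bar> < C2 * r * exp (- alpha' * (t - t0)) \<and>
         \<bar>N t - N1\<bar> < (C2 + 1 + C1) * r * exp (- alpha' * (t - t0))"
    if b: "t0 \<le> b" and bl: "\<forall>t\<in>{t0..b}. \<bar>N t - N1\<bar> \<le> \<eta> \<and> \<bar>P t - P1\<bar> \<le> \<eta> \<and> \<bar>Z t\<bar> \<le> \<eta>"
      and t: "t \<in> {t0..b}" for b t
  proof -
    interpret S: tde_sol mu lam g gam del del0 m NT f h R f' N1 P1 \<eta> \<alpha> c t0 r b \<phi>1 \<phi>2 \<phi>3 N P Z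
      by (rule TS[OF b bl])
    show ?thesis using S.Z_rate[OF t] S.P_rate[OF t] S.N_rate[OF t] by auto
  qed
  have small: "\<bar>N t - N1\<bar> < \<eta> / 2 \<and> \<bar>P t - P1\<bar> < \<eta> / 2 \<and> \<bar>Z t\<bar> < \<eta> / 2"
    if b: "t0 \<le> b" and bl: "\<forall>t\<in>{t0..b}. \<bar>N t - N1\<bar> \<le> \<eta> \<and> \<bar>P t - P1\<bar> \<le> \<eta> \<and> \<bar>Z t\<bar> \<le> \<eta>"
      and t: "t \<in> {t0..b}" for b t
  proof -
    have e1: "exp (- \<alpha> * (t - t0)) \<le> 1" "exp (- alpha' * (t - t0)) \<le> 1"
      using t alpha_pos alpha'_pos by (auto simp: mult_nonneg_nonneg)
    have R: "\<bar>Z t\<bar> < r * exp (- \<alpha> * (t - t0))" "\<bar>P t - P1\<bar> < C2 * r * exp (- alpha' * (t - t0))"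
         "\<bar>N t - N1\<bar> < (C2 + 1 + C1) * r * exp (- alpha' * (t - t0))"
      using rates[OF b bl t] by auto
    have "r * exp (- \<alpha> * (t - t0)) \<le> r * 1" using e1 r_pos by (intro mult_left_mono) auto
    moreover have "C2 * r * exp (- alpha' * (t - t0)) \<le> C2 * r * 1" using e1 r_pos C2_ge C1_nn
      by (intro mult_left_mono) auto
    moreover have "(C2 + 1 + C1) * r * exp (- alpha' * (t - t0)) \<le> (C2 + 1 + C1) * r * 1" using e1 r_pos C2_ge C1_nn
      by (intro mult_left_mono) auto
    moreover have "(C2 + 1 + C1) * r < C3 * r" unfolding C3_def using r_pos by simp
    moreover have "C2 * r < C3 * r" "r < C3 * r" unfolding C3_def using r_pos C1_nn C2_ge by auto
    ultimately show ?thesis using R rC3 by auto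
  qed
  define Fv where "Fv t = max \<bar>N t - N1\<bar> (max \<bar>P t - P1\<bar> \<bar>Z t\<bar>)" for t
  have allball: "\<forall>t\<in>{t0..b}. \<bar>N t - N1\<bar> \<le> \<eta> \<and> \<bar>P t - P1\<bar> \<le> \<eta> \<and> \<bar>Z t\<bar> \<le> \<eta>" if b: "t0 \<le> b" for b
  proof (rule ccontr)
    assume "\<not> (\<forall>t\<in>{t0..b}. \<bar>N t - N1\<bar> \<le> \<eta> \<and> \<bar>P t - P1\<bar> \<le> \<eta> \<and> \<bar>Z t\<bar> \<le> \<eta>)"
    then obtain t1 where t1: "t1 \<in> {t0..b}" "Fv t1 > \<eta>" unfolding Fv_def by force
    define F where "F t = Fv t - 3 * \<eta> / 4" for t
    have cs: "continuous_on {t0..b} N" "continuous_on {t0..b} P" "continuous_on {t0..b} Z"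
      using sol_cont[OF sol] by auto
    have cF: "continuous_on {t0..b} F" unfolding F_def Fv_def using cs by (auto intro!: continuous_intros)
    have v0: "N t0 = \<phi>1 0" "P t0 = \<phi>2 0" "Z t0 = \<phi>3 0"
      using sol t0p unfolding tde_solution_def by (metis add_0_right atLeastAtMost_iff neg_le_0_iff_le order_refl less_imp_le)+
    have F0: "F t0 < 0"
    proof -
      have "\<bar>\<phi>1 0 - N1\<bar> < r" "\<bar>\<phi>2 0 - P1\<bar> < r" "\<bar>\<phi>3 0\<bar> < r" using init' t0p by auto
      then have "Fv t0 < r" unfolding Fv_def v0 by simp
      then show ?thesis unfolding F_def using r_le4 eta_pos by linarith
    qed
    have Ft1: "F t1 \<ge> 0" unfolding F_def using t1 eta_pos by auto
    obtain ts where ts: "ts \<in> {t0<..b}" "F ts \<ge> 0" "\<forall>u\<in>{t0..<ts}. F u < 0"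
      using first_time[OF cF F0 t1(1) Ft1] by blast
    have cF': "continuous_on {t0..ts} F" by (rule continuous_on_subset[OF cF]) (use ts in auto)
    obtain x where x: "t0 \<le> x" "x \<le> ts" "F x = 0" using IVT'[of F t0 0 ts, OF _ _ _ cF'] F0 ts by auto
    have "x = ts"
    proof (rule ccontr)
      assume "x \<noteq> ts"
      then have "x \<in> {t0..<ts}" using x by auto
      then have "F x < 0" using ts(3) by blast
      then show False using x by simp
    qed
    then have Fts: "F ts = 0" using x by simp
    have blt: "\<forall>t\<in>{t0..ts}. \<bar>N t - N1\<bar> \<le> \<eta> \<and> \<bar>P t - P1\<bar> \<le> \<eta> \<and> \<bar>Z t\<bar> \<le> \<eta>"
    proof
      fix u assume u: "u \<in> {t0..ts}"
      have "F u \<le> 0"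
      proof (cases "u = ts")
        case True then show ?thesis using Fts by simp
      next
        case False
        then have "u \<in> {t0..<ts}" using u by auto
        then have "F u < 0" using ts(3) by blast
        then show ?thesis by simp
      qed
      then have "Fv u \<le> \<eta>" unfolding F_def using eta_pos by auto
      then show "\<bar>N u - N1\<bar> \<le> \<eta> \<and> \<bar>P u - P1\<bar> \<le> \<eta> \<and> \<bar>Z u\<bar> \<le> \<eta>" unfolding Fv_def by auto
    qed
    have "\<bar>N ts - N1\<bar> < \<eta> / 2 \<and> \<bar>P ts - P1\<bar> < \<eta> / 2 \<and> \<bar>Z ts\<bar> < \<eta> / 2"
      using small[OF _ blt, of ts] ts by auto
    then have "F ts < 0" unfolding F_def Fv_def using eta_pos by auto
    then show False using Fts by simp
  qed
  show ?thesis using rates[OF t allball[OF t], of t] small[OF t allball[OF t], of t] t unfolding r_def by auto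
qed

end


context tde
begin

lemma exists_eta: "\<epsilon> > 0 \<Longrightarrow> \<exists>\<eta> \<alpha> c. tde_eta mu lam g gam del del0 m NT f h R f' N1 P1 \<eta> \<alpha> c \<and> \<eta> \<le> \<epsilon>"
proof -
  assume eps: "\<epsilon> > 0"
  have P1i: "P1 \<in> interior {0..}" using P1_pos by simp
  have cR: "isCont R P1" by (rule continuous_on_interior[OF R_cont P1i])
  have ch: "isCont h P1" by (rule continuous_on_interior[OF h_cont P1i])
  have l1: "((\<lambda>\<eta>. P1 + \<eta>) \<longlongrightarrow> P1) (at_right 0)"
    using tendsto_add[OF tendsto_const[of P1] tendsto_ident_at[of 0 "{0<..}"]] by simp
  have l2: "((\<lambda>\<eta>. P1 - \<eta>) \<longlongrightarrow> P1) (at_right 0)"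
    using tendsto_diff[OF tendsto_const[of P1] tendsto_ident_at[of 0 "{0<..}"]] by simp
  have lR1: "((\<lambda>\<eta>. R (P1 + \<eta>)) \<longlongrightarrow> R P1) (at_right 0)" by (rule isCont_tendsto_compose[OF cR l1])
  have lR2: "((\<lambda>\<eta>. R (P1 - \<eta>)) \<longlongrightarrow> R P1) (at_right 0)" by (rule isCont_tendsto_compose[OF cR l2])
  have lh: "((\<lambda>\<eta>. h (P1 + \<eta>)) \<longlongrightarrow> h P1) (at_right 0)" by (rule isCont_tendsto_compose[OF ch l1])
  have RP1: "R P1 > 0" using R_pos P1_pos by simp
  have lk: "((\<lambda>\<eta>. R (P1 + \<eta>) / R (P1 - \<eta>) * exp (- del0 * m / R (P1 + \<eta>)) * (gam * g) * h (P1 + \<eta>))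
      \<longlongrightarrow> R P1 / R P1 * exp (- del0 * m / R P1) * (gam * g) * h P1) (at_right 0)"
    using RP1 by (intro tendsto_intros lR1 lR2 lh) auto
  have lim_lt: "R P1 / R P1 * exp (- del0 * m / R P1) * (gam * g) * h P1 < del"
    using qP1 RP1 by (simp add: algebra_simps)
  have ev1: "eventually (\<lambda>\<eta>. R (P1 + \<eta>) / R (P1 - \<eta>) * exp (- del0 * m / R (P1 + \<eta>)) * (gam * g) * h (P1 + \<eta>) < del) (at_right 0)"
    by (rule order_tendstoD(2)[OF lk lim_lt])
  obtain b0 where b0: "b0 > 0" "\<forall>y>0. y < b0 \<longrightarrow> R (P1 + y) / R (P1 - y) * exp (- del0 * m / R (P1 + y)) * (gam * g) * h (P1 + y) < del"
    using ev1 unfolding eventually_at_right_field by auto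
  define \<eta> where "\<eta> = min (b0 / 2) (min (P1 / 4) (min (N1 / 4) \<epsilon>))"
  have eta: "\<eta> > 0" "\<eta> < b0" "\<eta> < P1 / 2" "\<eta> < N1 / 2" "\<eta> \<le> \<epsilon>"
    unfolding \<eta>_def using b0 P1_pos N1_pos eps by auto
  define k where "k = R (P1 + \<eta>) / R (P1 - \<eta>) * exp (- del0 * m / R (P1 + \<eta>)) * (gam * g) * h (P1 + \<eta>)"
  have klt: "k < del" unfolding k_def using b0 eta by auto
  define T where "T = m / R (P1 - \<eta>)"
  have la: "((\<lambda>a. a + k * exp (a * T)) \<longlongrightarrow> 0 + k * exp (0 * T)) (at_right 0)"
    by (intro tendsto_intros tendsto_ident_at)
  have "eventually (\<lambda>a. a + k * exp (a * T) < del) (at_right 0)"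
    by (rule order_tendstoD(2)[OF la]) (use klt in simp)
  then obtain a0 where a0: "a0 > 0" "\<forall>y>0. y < a0 \<longrightarrow> y + k * exp (y * T) < del"
    unfolding eventually_at_right_field by auto
  define \<alpha> where "\<alpha> = a0 / 2"
  have al: "\<alpha> > 0" "\<alpha> + k * exp (\<alpha> * T) < del" unfolding \<alpha>_def using a0(1) a0(2)[rule_format, of "a0 / 2"] by auto
  obtain c where c: "c > 0" "\<forall>y z. N1 - \<eta> \<le> y \<longrightarrow> y \<le> z \<longrightarrow> z \<le> N1 + \<eta> \<longrightarrow> f z - f y \<ge> c * (z - y)"
    using slope_lemma[OF f_der f'_cont f'_pos, of "N1 - \<eta>" "N1 + \<eta>"] eta by auto
  have "tde_eta mu lam g gam del del0 m NT f h R f' N1 P1 \<eta> \<alpha> c"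
    by (rule tde_eta.intro[OF tde_axioms], unfold_locales)
       (use eta al c in \<open>auto simp: k_def T_def\<close>)
  then show ?thesis using eta by blast
qed

end


lemma strict_mono_deriv:
  fixes F F' :: "real \<Rightarrow> real"
  assumes der: "\<forall>x\<ge>0. (F has_real_derivative F' x) (at x within {0..})" and pos: "\<forall>x\<ge>0. F' x > 0"
    and xy: "0 \<le> x" "x < y"
  shows "F x < F y"
proof -
  have contF: "continuous_on {0..} F" by (rule cont_of_deriv0[OF der])
  show ?thesis
  proof (rule DERIV_pos_imp_increasing_open[OF xy(2)])
    fix z assume z: "x < z" "z < y"
    then have "(F has_real_derivative F' z) (at z)" using der xy by (intro deriv_at_of_within0) auto
    then show "\<exists>d. (F has_real_derivative d) (at z) \<and> d > 0" using pos z xy by auto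
  next
    show "continuous_on {x..y} F" by (rule continuous_on_subset[OF contF]) (use xy in auto)
  qed
qed

lemma mono_deriv:
  fixes F F' :: "real \<Rightarrow> real"
  assumes der: "\<forall>x\<ge>0. (F has_real_derivative F' x) (at x within {0..})" and pos: "\<forall>x\<ge>0. F' x \<ge> 0"
    and xy: "0 \<le> x" "x \<le> y"
  shows "F x \<le> F y"
proof -
  have contF: "continuous_on {0..} F" by (rule cont_of_deriv0[OF der])
  show ?thesis
  proof (rule DERIV_nonneg_imp_increasing_open[OF xy(2)])
    fix z assume z: "x < z" "z < y"
    then have "(F has_real_derivative F' z) (at z)" using der xy by (intro deriv_at_of_within0) auto
    then show "\<exists>d. (F has_real_derivative d) (at z) \<and> d \<ge> 0" using pos z xy by auto
  next
    show "continuous_on {x..y} F" by (rule continuous_on_subset[OF contF]) (use xy in auto)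
  qed
qed

lemma dist3_le:
  fixes a b c x y z :: real
  shows "dist (a, b, c) (x, y, z) \<le> \<bar>a - x\<bar> + \<bar>b - y\<bar> + \<bar>c - z\<bar>"
proof -
  have "dist (b, c) (y, z) \<le> \<bar>b - y\<bar> + \<bar>c - z\<bar>"
    unfolding dist_Pair_Pair dist_real_def using sqrt_sum_squares_le_sum_abs by simp
  moreover have "dist (a, b, c) (x, y, z) \<le> \<bar>a - x\<bar> + dist (b, c) (y, z)"
    unfolding dist_Pair_Pair[of a "(b, c)"] using sqrt_sum_squares_le_sum_abs[of "dist a x" "dist (b, c) (y, z)"]
    by (simp add: dist_real_def)
  ultimately show ?thesis by simp
qed

lemma dist3_ge:
  fixes a b c x y z :: real
  shows "\<bar>a - x\<bar> \<le> dist (a, b, c) (x, y, z)" "\<bar>b - y\<bar> \<le> dist (a, b, c) (x, y, z)" "\<bar>c - z\<bar> \<le> dist (a, b, c) (x, y, z)"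
proof -
  show "\<bar>a - x\<bar> \<le> dist (a, b, c) (x, y, z)" using dist_fst_le[of "(a, b, c)" "(x, y, z)"] by (simp add: dist_real_def)
  have s: "dist (b, c) (y, z) \<le> dist (a, b, c) (x, y, z)" using dist_snd_le[of "(a, b, c)" "(x, y, z)"] by simp
  show "\<bar>b - y\<bar> \<le> dist (a, b, c) (x, y, z)" using dist_fst_le[of "(b, c)" "(y, z)"] s by (simp add: dist_real_def)
  show "\<bar>c - z\<bar> \<le> dist (a, b, c) (x, y, z)" using dist_snd_le[of "(b, c)" "(y, z)"] s by (simp add: dist_real_def)
qed

lemma exp_decay: "(a::real) > 0 \<Longrightarrow> ((\<lambda>t. exp (- a * (t - t0))) \<longlongrightarrow> 0) at_top"
proof -
  assume a: "a > 0"
  have "filterlim (\<lambda>t. a * (t - t0)) at_top at_top"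
    unfolding filterlim_at_top
  proof
    fix Zb :: real
    show "eventually (\<lambda>t. Zb \<le> a * (t - t0)) at_top"
      unfolding eventually_at_top_linorder
    proof (rule exI[of _ "t0 + Zb / a"], intro allI impI)
      fix n assume "t0 + Zb / a \<le> n"
      then have "Zb / a \<le> n - t0" by simp
      then show "Zb \<le> a * (n - t0)" using a by (simp add: pos_divide_le_eq mult.commute)
    qed
  qed
  then have "filterlim (\<lambda>t. - (a * (t - t0))) at_bot at_top" by (simp add: filterlim_uminus_at_bot)
  then have "filterlim (\<lambda>t. exp (- (a * (t - t0)))) (nhds 0) at_top" by (rule filterlim_compose[OF exp_at_bot])
  then show ?thesis by simp
qed

lemma decay_lim:
  fixes X :: "real \<Rightarrow> real"
  assumes a: "a > 0" and b: "\<forall>t\<ge>t0. \<bar>X t - L\<bar> \<le> K * exp (- a * (t - t0))"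
  shows "(X \<longlongrightarrow> L) at_top"
proof -
  have e: "((\<lambda>t. exp (- a * (t - t0))) \<longlongrightarrow> 0) at_top" by (rule exp_decay[OF a])
  have "((\<lambda>t. K * exp (- a * (t - t0))) \<longlongrightarrow> K * 0) at_top" by (rule tendsto_mult[OF tendsto_const e])
  then have lim: "((\<lambda>t. K * exp (- a * (t - t0))) \<longlongrightarrow> 0) at_top" unfolding mult_zero_right .
  have ev: "eventually (\<lambda>t. norm (X t - L) \<le> K * exp (- a * (t - t0))) at_top"
  proof (rule eventually_at_top_linorderI[of t0])
    fix t assume "t0 \<le> t"
    then show "norm (X t - L) \<le> K * exp (- a * (t - t0))" using b by simp
  qed
  have "((\<lambda>t. X t - L) \<longlongrightarrow> 0) at_top" by (rule Lim_null_comparison[OF ev lim])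
  then show ?thesis by (rule LIM_zero_cancel)
qed

theorem proposition5:
  fixes mu lam g gam del del0 m NT :: real
    and f h R f' h' R' :: "real \<Rightarrow> real"
  assumes "mu > lam" "lam > 0" "g > 0" "gam > 0" "gam \<le> 1" "del > 0" "gam * g > del"
    "del0 \<ge> 0" "m > 0" "NT > 0"
    and f_C1: "\<forall>x\<ge>0. (f has_real_derivative f' x) (at x within {0..})" "continuous_on {0..} f'"
    and f_props: "\<forall>x\<ge>0. f x \<ge> 0" "f 0 = 0" "\<forall>x\<ge>0. f' x > 0" "(f \<longlongrightarrow> 1) at_top"
    and h_C1: "\<forall>x\<ge>0. (h has_real_derivative h' x) (at x within {0..})" "continuous_on {0..} h'"
    and h_props: "\<forall>x\<ge>0. h x \<ge> 0" "h 0 = 0" "\<forall>x\<ge>0. h' x > 0" "(h \<longlongrightarrow> 1) at_top"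
    and R_C1: "\<forall>x\<ge>0. (R has_real_derivative R' x) (at x within {0..})" "continuous_on {0..} R'"
    and R_props: "\<forall>x\<ge>0. R x \<ge> 0" "\<forall>x\<ge>0. R' x \<ge> 0" "R 0 = 0 \<longrightarrow> R' 0 > 0"
    and R_lim: "(R \<longlongrightarrow> Rinf) at_top"
    and P2_exists: "del0 = 0 \<or> (del0 > 0 \<and> m < Rinf * ln (gam * g / del) / del0)"
  defines "NT1 \<equiv> THE x. x \<ge> 0 \<and> f x = lam / mu"
    and "P2 \<equiv> THE p. p > 0 \<and> gam * g * exp (- del0 * m / R p) * h p = del"
  defines "NT2 \<equiv> NT1 + P2"
    and "N1 \<equiv> NT1"
    and "P1 \<equiv> NT - NT1"
  assumes "NT1 < NT" "NT < NT2"
  shows "\<forall>\<epsilon>>0. \<exists>r>0. \<forall>t0 \<phi>1 \<phi>2 \<phi>3 N P Z.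
            in_D g gam del0 m NT t0 h R \<phi>1 \<phi>2 \<phi>3 \<and>
            (\<forall>t\<in>{-t0..0}. dist (\<phi>1 t, \<phi>2 t, \<phi>3 t) (N1, P1, 0) < r) \<and>
            tde_solution mu lam g gam del del0 m NT f h R t0 \<phi>1 \<phi>2 \<phi>3 N P Z
            \<longrightarrow> (\<forall>t\<ge>t0. dist (N t, P t, Z t) (N1, P1, 0) < \<epsilon>) \<and>
                ((\<lambda>t. (N t, P t, Z t)) \<longlongrightarrow> (N1, P1, 0)) at_top"
proof -
  note A = assms
  have f_cont: "continuous_on {0..} f" by (rule cont_of_deriv0[OF f_C1(1)])
  have h_cont: "continuous_on {0..} h" by (rule cont_of_deriv0[OF h_C1(1)])
  have R_cont: "continuous_on {0..} R" by (rule cont_of_deriv0[OF R_C1(1)])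
  have f_smono: "\<And>x y. 0 \<le> x \<Longrightarrow> x < y \<Longrightarrow> f x < f y" by (rule strict_mono_deriv[OF f_C1(1) f_props(3)])
  have h_smono: "\<And>x y. 0 \<le> x \<Longrightarrow> x < y \<Longrightarrow> h x < h y" by (rule strict_mono_deriv[OF h_C1(1) h_props(3)])
  have R_mono: "\<And>x y. 0 \<le> x \<Longrightarrow> x \<le> y \<Longrightarrow> R x \<le> R y" by (rule mono_deriv[OF R_C1(1) R_props(2)])
  have R_pos: "R x > 0" if x: "x > 0" for x
  proof (cases "R 0 > 0")
    case True then show ?thesis using R_mono[of 0 x] x by auto
  next
    case False
    then have R0: "R 0 = 0" using R_props(1) by force
    then have "R' 0 > 0" using R_props(3) by simp
    then obtain d where d: "d > 0" "\<forall>h>0. 0 + h \<in> {0..} \<longrightarrow> h < d \<longrightarrow> R 0 < R (0 + h)"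
      using has_real_derivative_pos_inc_right[OF R_C1(1)[rule_format, of 0]] by auto
    define y where "y = min x (d / 2)"
    have y: "y > 0" "y < d" "y \<le> x" unfolding y_def using d x by auto
    have "R 0 < R y" using d y by auto
    moreover have "R y \<le> R x" using R_mono[of y x] y by auto
    ultimately show ?thesis using R0 by simp
  qed
  have h_nn: "x \<ge> 0 \<Longrightarrow> h x \<ge> 0" for x using h_smono[of 0 x] h_props(2) by (cases "x = 0") auto
  have lm: "0 < lam / mu" "lam / mu < 1" using A(1,2) by (auto simp: field_simps)
  have ex1: "\<exists>!x. x \<ge> 0 \<and> f x = lam / mu"
  proof (rule ex_ex1I)
    obtain X where X: "\<forall>x\<ge>X. f x > lam / mu"
      using order_tendstoD(1)[OF f_props(4) lm(2)] unfolding eventually_at_top_linorder by auto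
    define X' where "X' = max X 1"
    have X': "f X' > lam / mu" "X' \<ge> 0" using X unfolding X'_def by auto
    have cf: "continuous_on {0..X'} f" by (rule continuous_on_subset[OF f_cont]) auto
    obtain x where "0 \<le> x" "x \<le> X'" "f x = lam / mu"
      using IVT'[of f 0 "lam / mu" X', OF _ _ _ cf] f_props(2) lm X' by auto
    then show "\<exists>x. x \<ge> 0 \<and> f x = lam / mu" by auto
  next
    fix x y assume xy: "x \<ge> 0 \<and> f x = lam / mu" "y \<ge> 0 \<and> f y = lam / mu"
    show "x = y"
    proof (rule ccontr)
      assume "x \<noteq> y"
      then have "x < y \<or> y < x" by auto
      then show False using f_smono[of x y] f_smono[of y x] xy by auto
    qed
  qed
  have NT1: "NT1 \<ge> 0" "f NT1 = lam / mu" unfolding NT1_def using theI'[OF ex1] by auto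
  have NT1_pos: "NT1 > 0" using NT1 f_props(2) lm by (cases "NT1 = 0") auto
  define q where "q p = gam * g * exp (- del0 * m / R p) * h p" for p
  have gg: "gam * g > 0" using A(3,4) by simp
  have q_smono: "q x < q y" if xy: "0 < x" "x < y" for x y
  proof -
    have Rx: "R x > 0" "R x \<le> R y" using R_pos[of x] R_mono[of x y] xy by auto
    have "del0 * m / R y \<le> del0 * m / R x" using Rx A(8,9) by (intro divide_left_mono) auto
    then have e: "exp (- del0 * m / R x) \<le> exp (- del0 * m / R y)" by simp
    have hx: "h x \<ge> 0" "h x < h y" using h_nn[of x] h_smono[of x y] xy by auto
    have "exp (- del0 * m / R x) * h x \<le> exp (- del0 * m / R y) * h x" using e hx by (intro mult_right_mono) auto
    also have "\<dots> < exp (- del0 * m / R y) * h y" using hx by simp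
    finally have "exp (- del0 * m / R x) * h x < exp (- del0 * m / R y) * h y" .
    then have "gam * g * (exp (- del0 * m / R x) * h x) < gam * g * (exp (- del0 * m / R y) * h y)"
      by (rule mult_strict_left_mono[OF _ gg])
    then show ?thesis unfolding q_def by (simp add: mult.assoc)
  qed
  have Rinf: "Rinf > 0"
  proof -
    have "R 1 \<le> Rinf"
      by (rule tendsto_lowerbound[OF R_lim]) (use R_mono in \<open>auto simp: eventually_at_top_linorder intro!: exI[of _ 1]\<close>)
    then show ?thesis using R_pos[of 1] by simp
  qed
  have Lq: "gam * g * exp (- del0 * m / Rinf) > del"
  proof (cases "del0 = 0")
    case True then show ?thesis using A(7) by simp
  next
    case False
    then have d0: "del0 > 0" "m < Rinf * ln (gam * g / del) / del0" using P2_exists by auto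
    have "m * del0 < Rinf * ln (gam * g / del)" using d0 by (simp add: pos_less_divide_eq)
    then have "del0 * m / Rinf < ln (gam * g / del)" using Rinf by (simp add: pos_divide_less_eq mult.commute)
    then have "exp (- (del0 * m / Rinf)) > exp (- ln (gam * g / del))" by simp
    moreover have "exp (- ln (gam * g / del)) = del / (gam * g)" using A(6) gg by (simp add: exp_minus)
    ultimately have "exp (- del0 * m / Rinf) > del / (gam * g)" by simp
    then show ?thesis using gg by (simp add: pos_divide_less_eq mult.commute)
  qed
  have q_lim: "(q \<longlongrightarrow> gam * g * exp (- del0 * m / Rinf) * 1) at_top"
    unfolding q_def[abs_def] using Rinf by (intro tendsto_intros R_lim h_props(4)) auto
  obtain p1 where p1: "p1 > 0" "q p1 > del"
  proof -
    obtain X where X: "\<forall>x\<ge>X. q x > del"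
      using order_tendstoD(1)[OF q_lim] Lq unfolding eventually_at_top_linorder by auto
    show ?thesis using that[of "max X 1"] X by auto
  qed
  obtain p0 where p0: "p0 > 0" "p0 < p1" "gam * g * h p0 < del"
  proof -
    have "(h \<longlongrightarrow> h 0) (at 0 within {0..})" using h_cont unfolding continuous_on_def by auto
    then have "(h \<longlongrightarrow> 0) (at_right 0)" using h_props(2) by (auto intro: tendsto_within_subset)
    then have "((\<lambda>p. gam * g * h p) \<longlongrightarrow> gam * g * 0) (at_right 0)" by (intro tendsto_intros)
    then have "eventually (\<lambda>p. gam * g * h p < del) (at_right 0)" using A(6) by (intro order_tendstoD(2)) auto
    then obtain b where b: "b > 0" "\<forall>y>0. y < b \<longrightarrow> gam * g * h y < del"
      unfolding eventually_at_right_field by auto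
    show ?thesis using that[of "min b p1 / 2"] b p1 by auto
  qed
  have qp0: "q p0 < del"
  proof -
    have "del0 * m / R p0 \<ge> 0" using R_pos[of p0] p0 A(8,9) by simp
    then have "exp (- del0 * m / R p0) \<le> 1" by simp
    then have "gam * g * exp (- del0 * m / R p0) * h p0 \<le> gam * g * 1 * h p0"
      using gg h_nn[of p0] p0 by (intro mult_right_mono mult_left_mono) auto
    then show ?thesis using p0 unfolding q_def by simp
  qed
  have cq: "continuous_on {p0..p1} q"
  proof -
    have sub: "{p0..p1} \<subseteq> {0..}" using p0 by auto
    have "continuous_on {p0..p1} R" "continuous_on {p0..p1} h"
      using continuous_on_subset[OF R_cont sub] continuous_on_subset[OF h_cont sub] by auto
    moreover have "\<forall>x\<in>{p0..p1}. R x \<noteq> 0"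
    proof
      fix x assume "x \<in> {p0..p1}"
      then have "x > 0" using p0 by auto
      then show "R x \<noteq> 0" using R_pos[of x] by simp
    qed
    ultimately show ?thesis unfolding q_def[abs_def] by (auto intro!: continuous_intros)
  qed
  have ex2: "\<exists>!p. p > 0 \<and> gam * g * exp (- del0 * m / R p) * h p = del"
  proof (rule ex_ex1I)
    obtain p where "p0 \<le> p" "p \<le> p1" "q p = del"
      using IVT'[of q p0 del p1, OF _ _ _ cq] qp0 p1 p0 by auto
    then have "p > 0 \<and> gam * g * exp (- del0 * m / R p) * h p = del" using p0 unfolding q_def by auto
    then show "\<exists>p. p > 0 \<and> gam * g * exp (- del0 * m / R p) * h p = del" by blast
  next
    fix x y assume xy: "x > 0 \<and> gam * g * exp (- del0 * m / R x) * h x = del"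
                       "y > 0 \<and> gam * g * exp (- del0 * m / R y) * h y = del"
    show "x = y"
    proof (rule ccontr)
      assume "x \<noteq> y"
      then have "x < y \<or> y < x" by auto
      then show False using q_smono[of x y] q_smono[of y x] xy unfolding q_def by auto
    qed
  qed
  have P2: "P2 > 0" "q P2 = del" unfolding P2_def q_def using theI'[OF ex2] by auto
  have P1_pos: "P1 > 0" unfolding P1_def using A(35) by simp
  have "P1 < P2" unfolding P1_def using A(36) unfolding NT2_def by simp
  then have qP1: "q P1 < del" using q_smono[OF P1_pos] P2 by metis
  have T: "tde mu lam g gam del del0 m NT f h R f' N1 P1"
    by (unfold_locales) (use A f_C1 f_props h_cont h_smono h_props R_cont R_mono R_pos NT1 NT1_pos P1_pos qP1
          in \<open>auto simp: N1_def P1_def q_def\<close>)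
  interpret T: tde mu lam g gam del del0 m NT f h R f' N1 P1 by (rule T)
  show ?thesis
  proof (intro allI impI)
    fix \<epsilon> :: real assume eps: "\<epsilon> > 0"
    obtain \<eta> \<alpha> c where E: "tde_eta mu lam g gam del del0 m NT f h R f' N1 P1 \<eta> \<alpha> c" and eta_le: "\<eta> \<le> \<epsilon> / 4"
      using T.exists_eta[of "\<epsilon> / 4"] eps by auto
    interpret E: tde_eta mu lam g gam del del0 m NT f h R f' N1 P1 \<eta> \<alpha> c by (rule E)
    define r where "r = \<eta> / (2 * E.C3)"
    have r_pos: "r > 0" unfolding r_def using E.eta_pos E.C3_pos by simp
    show "\<exists>r>0. \<forall>t0 \<phi>1 \<phi>2 \<phi>3 N P Z.
            in_D g gam del0 m NT t0 h R \<phi>1 \<phi>2 \<phi>3 \<and>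
            (\<forall>t\<in>{-t0..0}. dist (\<phi>1 t, \<phi>2 t, \<phi>3 t) (N1, P1, 0) < r) \<and>
            tde_solution mu lam g gam del del0 m NT f h R t0 \<phi>1 \<phi>2 \<phi>3 N P Z
            \<longrightarrow> (\<forall>t\<ge>t0. dist (N t, P t, Z t) (N1, P1, 0) < \<epsilon>) \<and>
                ((\<lambda>t. (N t, P t, Z t)) \<longlongrightarrow> (N1, P1, 0)) at_top"
    proof (rule exI[of _ r], rule conjI[OF r_pos], intro allI impI)
      fix t0 \<phi>1 \<phi>2 \<phi>3 N P Z
      assume H: "in_D g gam del0 m NT t0 h R \<phi>1 \<phi>2 \<phi>3 \<and>
            (\<forall>t\<in>{-t0..0}. dist (\<phi>1 t, \<phi>2 t, \<phi>3 t) (N1, P1, 0) < r) \<and>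
            tde_solution mu lam g gam del del0 m NT f h R t0 \<phi>1 \<phi>2 \<phi>3 N P Z"
      have init: "\<forall>t\<in>{-t0..0}. \<bar>\<phi>1 t - N1\<bar> < \<eta> / (2 * E.C3) \<and> \<bar>\<phi>2 t - P1\<bar> < \<eta> / (2 * E.C3) \<and> \<bar>\<phi>3 t\<bar> < \<eta> / (2 * E.C3)"
      proof
        fix t assume t: "t \<in> {-t0..0}"
        have d: "dist (\<phi>1 t, \<phi>2 t, \<phi>3 t) (N1, P1, 0) < r" using H t by blast
        show "\<bar>\<phi>1 t - N1\<bar> < \<eta> / (2 * E.C3) \<and> \<bar>\<phi>2 t - P1\<bar> < \<eta> / (2 * E.C3) \<and> \<bar>\<phi>3 t\<bar> < \<eta> / (2 * E.C3)"
          using dist3_ge[where a="\<phi>1 t" and b="\<phi>2 t" and c="\<phi>3 t" and x=N1 and y=P1 and z=0] d unfolding r_def by auto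
      qed
      have B: "\<bar>Z t\<bar> < \<eta> / (2 * E.C3) * exp (- \<alpha> * (t - t0)) \<and>
         \<bar>P t - P1\<bar> < E.C2 * (\<eta> / (2 * E.C3)) * exp (- E.alpha' * (t - t0)) \<and>
         \<bar>N t - N1\<bar> < (E.C2 + 1 + E.C1) * (\<eta> / (2 * E.C3)) * exp (- E.alpha' * (t - t0)) \<and>
         \<bar>N t - N1\<bar> < \<eta> / 2 \<and> \<bar>P t - P1\<bar> < \<eta> / 2 \<and> \<bar>Z t\<bar> < \<eta> / 2" if t: "t \<ge> t0" for t
        using E.bootstrap[of t0 \<phi>1 \<phi>2 \<phi>3 N P Z t] H init t by blast
      have D: "\<forall>t\<ge>t0. dist (N t, P t, Z t) (N1, P1, 0) < \<epsilon>"
      proof (intro allI impI)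
        fix t assume t: "t \<ge> t0"
        have "dist (N t, P t, Z t) (N1, P1, 0) \<le> \<bar>N t - N1\<bar> + \<bar>P t - P1\<bar> + \<bar>Z t - 0\<bar>" by (rule dist3_le)
        also have "\<dots> < \<eta> / 2 + \<eta> / 2 + \<eta> / 2" using B[OF t] by auto
        also have "\<dots> \<le> \<epsilon>" using eta_le E.eta_pos by simp
        finally show "dist (N t, P t, Z t) (N1, P1, 0) < \<epsilon>" .
      qed
      have lN: "(N \<longlongrightarrow> N1) at_top"
        by (rule decay_lim[OF E.alpha'_pos, of t0 N N1 "(E.C2 + 1 + E.C1) * (\<eta> / (2 * E.C3))"]) (use B in \<open>auto intro: less_imp_le\<close>)
      have lP: "(P \<longlongrightarrow> P1) at_top"
        by (rule decay_lim[OF E.alpha'_pos, of t0 P P1 "E.C2 * (\<eta> / (2 * E.C3))"]) (use B in \<open>auto intro: less_imp_le\<close>)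
      have lZ: "(Z \<longlongrightarrow> 0) at_top"
        by (rule decay_lim[OF E.alpha_pos, of t0 Z 0 "\<eta> / (2 * E.C3)"]) (use B in \<open>auto intro: less_imp_le\<close>)
      have "((\<lambda>t. (N t, P t, Z t)) \<longlongrightarrow> (N1, P1, 0)) at_top"
        by (intro tendsto_Pair lN lP lZ)
      then show "(\<forall>t\<ge>t0. dist (N t, P t, Z t) (N1, P1, 0) < \<epsilon>) \<and> ((\<lambda>t. (N t, P t, Z t)) \<longlongrightarrow> (N1, P1, 0)) at_top"
        using D by blast
    qed
  qed
qed

end
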